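(* If $n=5$ or $n$ is a positive integer divisible by $10$, then $d(L(n,2n-2)) = n^2 - \frac{8n}{5}$.
   Context: For positive integers $n,k$, let $\mathcal{L}_{n,k}$ be the set of $n\times n$ squares all of whose entries are colored with colors from a fixed set of $k$ colors $\{1,\dots,k\}$ such that any two entries in the same row, or in the same column, have different colors. A partial coloring of an $n\times n$ square assigns colors from $\{1,\dots,k\}$ to some of its entries; the remaining entries are called uncolored. A partial coloring extends to $L(n,k)$ if the uncolored entries can be colored so that the resulting fully colored square lies in $\mathcal{L}_{n,k}$ (keeping the given colors), and it uniquely extends to $L(n,k)$ if there is exactly one such way. A defining set of the $k$-coloring of an $n\times n$ square is the set of colored entries of a partial coloring that uniquely extends to $L(n,k)$; the defining number $d(L(n,k))$ is the minimum cardinality of such a defining set. *)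

theory Defs
  imports Complex_Main
begin

definition cells :: "nat \<Rightarrow> (nat \<times> nat) set" where
  "cells n = {0..<n} \<times> {0..<n}"

definition partial_coloring :: "nat \<Rightarrow> nat \<Rightarrow> (nat \<times> nat \<rightharpoonup> nat) \<Rightarrow> bool" where
  "partial_coloring n k p \<longleftrightarrow> dom p \<subseteq> cells n \<and> ran p \<subseteq> {1..k}"

definition Lset :: "nat \<Rightarrow> nat \<Rightarrow> (nat \<times> nat \<rightharpoonup> nat) set" where
  "Lset n k = {c. dom c = cells n \<and> ran c \<subseteq> {1..k} \<and>
     (\<forall>i<n. \<forall>j<n. \<forall>j'<n. j \<noteq> j' \<longrightarrow> c (i,j) \<noteq> c (i,j')) \<and>
     (\<forall>j<n. \<forall>i<n. \<forall>i'<n. i \<noteq> i' \<longrightarrow> c (i,j) \<noteq> c (i',j))}"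

definition extends_to :: "nat \<Rightarrow> nat \<Rightarrow> (nat \<times> nat \<rightharpoonup> nat) \<Rightarrow> bool" where
  "extends_to n k p \<longleftrightarrow> (\<exists>c \<in> Lset n k. p \<subseteq>\<^sub>m c)"

definition uniquely_extends :: "nat \<Rightarrow> nat \<Rightarrow> (nat \<times> nat \<rightharpoonup> nat) \<Rightarrow> bool" where
  "uniquely_extends n k p \<longleftrightarrow> (\<exists>!c. c \<in> Lset n k \<and> p \<subseteq>\<^sub>m c)"

definition defining_number :: "nat \<Rightarrow> nat \<Rightarrow> nat" where
  "defining_number n k = (LEAST m. \<exists>p. partial_coloring n k p \<and> uniquely_extends n k p \<and> card (dom p) = m)"

end

theory Submission
  imports Defs
begin

definition eok :: "nat set \<Rightarrow> nat set \<Rightarrow> nat set \<Rightarrow> nat \<Rightarrow> nat \<Rightarrow> bool" where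
 "eok K A B a p \<longleftrightarrow> a \<in> A \<and> a \<in> B \<and> p \<in> A \<and> p \<in> B \<and> p \<noteq> a \<and>
    (\<forall>t. t \<in> A \<and> t \<in> B \<longrightarrow> t = a \<or> t = p) \<and> (\<forall>t\<in>K. t \<in> A \<or> t \<in> B)"
lemma eokD: "eok K A B a p \<Longrightarrow> t \<in> K \<Longrightarrow> (t \<in> A \<or> t \<in> B) \<and> (t \<in> A \<longrightarrow> t \<in> B \<longrightarrow> t = a \<or> t = p)"
  unfolding eok_def by blast
lemma eokE: "eok K A B a p \<Longrightarrow> a \<in> A \<and> a \<in> B \<and> p \<in> A \<and> p \<in> B \<and> p \<noteq> a"
  unfolding eok_def by blast
lemma abs_K14:
  assumes e: "eok K X Y1 a1 p1" "eok K X Y2 a2 p2" "eok K X Y3 a3 p3" "eok K X Y4 a4 p4"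
  and s: "p1 = a2 \<or> p2 = a1" "p1 = a3 \<or> p3 = a1" "p1 = a4 \<or> p4 = a1" "p2 = a3 \<or> p3 = a2" "p2 = a4 \<or> p4 = a2" "p3 = a4 \<or> p4 = a3"
  and d: "a1 \<noteq> a2" "a1 \<noteq> a3" "a1 \<noteq> a4" "a2 \<noteq> a3" "a2 \<noteq> a4" "a3 \<noteq> a4"
  and K: "a1 \<in> K" "a2 \<in> K" "a3 \<in> K" "a4 \<in> K" "p1 \<in> K" "p2 \<in> K" "p3 \<in> K" "p4 \<in> K"
  shows False
proof -
  note g0 = eokE[OF e(1)]
  note h0_0 = eokD[OF e(1) K(1)]
  note h0_1 = eokD[OF e(1) K(2)]
  note h0_2 = eokD[OF e(1) K(3)]
  note h0_3 = eokD[OF e(1) K(4)]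
  note h0_4 = eokD[OF e(1) K(5)]
  note h0_5 = eokD[OF e(1) K(6)]
  note h0_6 = eokD[OF e(1) K(7)]
  note h0_7 = eokD[OF e(1) K(8)]
  note g1 = eokE[OF e(2)]
  note h1_0 = eokD[OF e(2) K(1)]
  note h1_1 = eokD[OF e(2) K(2)]
  note h1_2 = eokD[OF e(2) K(3)]
  note h1_3 = eokD[OF e(2) K(4)]
  note h1_4 = eokD[OF e(2) K(5)]
  note h1_5 = eokD[OF e(2) K(6)]
  note h1_6 = eokD[OF e(2) K(7)]
  note h1_7 = eokD[OF e(2) K(8)]
  note g2 = eokE[OF e(3)]
  note h2_0 = eokD[OF e(3) K(1)]
  note h2_1 = eokD[OF e(3) K(2)]
  note h2_2 = eokD[OF e(3) K(3)]
  note h2_3 = eokD[OF e(3) K(4)]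
  note h2_4 = eokD[OF e(3) K(5)]
  note h2_5 = eokD[OF e(3) K(6)]
  note h2_6 = eokD[OF e(3) K(7)]
  note h2_7 = eokD[OF e(3) K(8)]
  note g3 = eokE[OF e(4)]
  note h3_0 = eokD[OF e(4) K(1)]
  note h3_1 = eokD[OF e(4) K(2)]
  note h3_2 = eokD[OF e(4) K(3)]
  note h3_3 = eokD[OF e(4) K(4)]
  note h3_4 = eokD[OF e(4) K(5)]
  note h3_5 = eokD[OF e(4) K(6)]
  note h3_6 = eokD[OF e(4) K(7)]
  note h3_7 = eokD[OF e(4) K(8)]
  show False using g0 h0_0 h0_1 h0_2 h0_3 h0_4 h0_5 h0_6 h0_7 g1 h1_0 h1_1 h1_2 h1_3 h1_4 h1_5 h1_6 h1_7 g2 h2_0 h2_1 h2_2 h2_3 h2_4 h2_5 h2_6 h2_7 g3 h3_0 h3_1 h3_2 h3_3 h3_4 h3_5 h3_6 h3_7 s d by (smt (z3))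
qed

lemma abs_P6:
  assumes e: "eok K R1 C1 a11 p11" "eok K R2 C1 a21 p21" "eok K R2 C2 a22 p22" "eok K R3 C2 a32 p32" "eok K R3 C3 a33 p33"
  and s: "p11 = a21 \<or> p21 = a11" "p21 = a22 \<or> p22 = a21" "p22 = a32 \<or> p32 = a22" "p32 = a33 \<or> p33 = a32"
  and x: "x12 \<in> R1" "x12 \<in> C2" "x13 \<in> R1" "x13 \<in> C3" "x23 \<in> R2" "x23 \<in> C3" "x31 \<in> R3" "x31 \<in> C1"
  and d: "a11 \<noteq> x12" "a11 \<noteq> x13" "x12 \<noteq> x13" "a21 \<noteq> a22" "a21 \<noteq> x23" "a22 \<noteq> x23" "x31 \<noteq> a32" "x31 \<noteq> a33" "a32 \<noteq> a33" "a11 \<noteq> a21" "a11 \<noteq> x31" "a21 \<noteq> x31" "x12 \<noteq> a22" "x12 \<noteq> a32" "a22 \<noteq> a32" "x13 \<noteq> x23" "x13 \<noteq> a33" "x23 \<noteq> a33"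
  and K: "a11 \<in> K" "a21 \<in> K" "a22 \<in> K" "a32 \<in> K" "a33 \<in> K" "p11 \<in> K" "p21 \<in> K" "p22 \<in> K" "p32 \<in> K" "p33 \<in> K" "x12 \<in> K" "x13 \<in> K" "x23 \<in> K" "x31 \<in> K"
  shows False
proof -
  note g0 = eokE[OF e(1)]
  note h0_0 = eokD[OF e(1) K(1)]
  note h0_1 = eokD[OF e(1) K(2)]
  note h0_2 = eokD[OF e(1) K(3)]
  note h0_3 = eokD[OF e(1) K(4)]
  note h0_4 = eokD[OF e(1) K(5)]
  note h0_5 = eokD[OF e(1) K(6)]
  note h0_6 = eokD[OF e(1) K(7)]
  note h0_7 = eokD[OF e(1) K(8)]
  note h0_8 = eokD[OF e(1) K(9)]
  note h0_9 = eokD[OF e(1) K(10)]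
  note h0_10 = eokD[OF e(1) K(11)]
  note h0_11 = eokD[OF e(1) K(12)]
  note h0_12 = eokD[OF e(1) K(13)]
  note h0_13 = eokD[OF e(1) K(14)]
  note g1 = eokE[OF e(2)]
  note h1_0 = eokD[OF e(2) K(1)]
  note h1_1 = eokD[OF e(2) K(2)]
  note h1_2 = eokD[OF e(2) K(3)]
  note h1_3 = eokD[OF e(2) K(4)]
  note h1_4 = eokD[OF e(2) K(5)]
  note h1_5 = eokD[OF e(2) K(6)]
  note h1_6 = eokD[OF e(2) K(7)]
  note h1_7 = eokD[OF e(2) K(8)]
  note h1_8 = eokD[OF e(2) K(9)]
  note h1_9 = eokD[OF e(2) K(10)]
  note h1_10 = eokD[OF e(2) K(11)]
  note h1_11 = eokD[OF e(2) K(12)]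
  note h1_12 = eokD[OF e(2) K(13)]
  note h1_13 = eokD[OF e(2) K(14)]
  note g2 = eokE[OF e(3)]
  note h2_0 = eokD[OF e(3) K(1)]
  note h2_1 = eokD[OF e(3) K(2)]
  note h2_2 = eokD[OF e(3) K(3)]
  note h2_3 = eokD[OF e(3) K(4)]
  note h2_4 = eokD[OF e(3) K(5)]
  note h2_5 = eokD[OF e(3) K(6)]
  note h2_6 = eokD[OF e(3) K(7)]
  note h2_7 = eokD[OF e(3) K(8)]
  note h2_8 = eokD[OF e(3) K(9)]
  note h2_9 = eokD[OF e(3) K(10)]
  note h2_10 = eokD[OF e(3) K(11)]
  note h2_11 = eokD[OF e(3) K(12)]
  note h2_12 = eokD[OF e(3) K(13)]
  note h2_13 = eokD[OF e(3) K(14)]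
  note g3 = eokE[OF e(4)]
  note h3_0 = eokD[OF e(4) K(1)]
  note h3_1 = eokD[OF e(4) K(2)]
  note h3_2 = eokD[OF e(4) K(3)]
  note h3_3 = eokD[OF e(4) K(4)]
  note h3_4 = eokD[OF e(4) K(5)]
  note h3_5 = eokD[OF e(4) K(6)]
  note h3_6 = eokD[OF e(4) K(7)]
  note h3_7 = eokD[OF e(4) K(8)]
  note h3_8 = eokD[OF e(4) K(9)]
  note h3_9 = eokD[OF e(4) K(10)]
  note h3_10 = eokD[OF e(4) K(11)]
  note h3_11 = eokD[OF e(4) K(12)]
  note h3_12 = eokD[OF e(4) K(13)]
  note h3_13 = eokD[OF e(4) K(14)]
  note g4 = eokE[OF e(5)]
  note h4_0 = eokD[OF e(5) K(1)]
  note h4_1 = eokD[OF e(5) K(2)]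
  note h4_2 = eokD[OF e(5) K(3)]
  note h4_3 = eokD[OF e(5) K(4)]
  note h4_4 = eokD[OF e(5) K(5)]
  note h4_5 = eokD[OF e(5) K(6)]
  note h4_6 = eokD[OF e(5) K(7)]
  note h4_7 = eokD[OF e(5) K(8)]
  note h4_8 = eokD[OF e(5) K(9)]
  note h4_9 = eokD[OF e(5) K(10)]
  note h4_10 = eokD[OF e(5) K(11)]
  note h4_11 = eokD[OF e(5) K(12)]
  note h4_12 = eokD[OF e(5) K(13)]
  note h4_13 = eokD[OF e(5) K(14)]
  show False using g0 h0_0 h0_1 h0_2 h0_3 h0_4 h0_5 h0_6 h0_7 h0_8 h0_9 h0_10 h0_11 h0_12 h0_13 g1 h1_0 h1_1 h1_2 h1_3 h1_4 h1_5 h1_6 h1_7 h1_8 h1_9 h1_10 h1_11 h1_12 h1_13 g2 h2_0 h2_1 h2_2 h2_3 h2_4 h2_5 h2_6 h2_7 h2_8 h2_9 h2_10 h2_11 h2_12 h2_13 g3 h3_0 h3_1 h3_2 h3_3 h3_4 h3_5 h3_6 h3_7 h3_8 h3_9 h3_10 h3_11 h3_12 h3_13 g4 h4_0 h4_1 h4_2 h4_3 h4_4 h4_5 h4_6 h4_7 h4_8 h4_9 h4_10 h4_11 h4_12 h4_13 s x d by (smt (z3))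
qed

lemma abs_S311:
  assumes e: "eok K X Y1 a1 p1" "eok K X Y2 a2 p2" "eok K X Y3 a3 p3" "eok K Z Y1 b1 q1" "eok K Z T bt qt"
  and s: "p1 = a2 \<or> p2 = a1" "p1 = a3 \<or> p3 = a1" "p2 = a3 \<or> p3 = a2" "p1 = b1 \<or> q1 = a1" "q1 = bt \<or> qt = b1"
  and x: "xt \<in> X" "xt \<in> T" "z2 \<in> Z" "z2 \<in> Y2" "z3 \<in> Z" "z3 \<in> Y3"
  and d: "a1 \<noteq> a2" "a1 \<noteq> a3" "a1 \<noteq> xt" "a2 \<noteq> a3" "a2 \<noteq> xt" "a3 \<noteq> xt" "b1 \<noteq> z2" "b1 \<noteq> z3" "b1 \<noteq> bt" "z2 \<noteq> z3" "z2 \<noteq> bt" "z3 \<noteq> bt" "a1 \<noteq> b1" "a2 \<noteq> z2" "a3 \<noteq> z3" "xt \<noteq> bt"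
  and K: "a1 \<in> K" "a2 \<in> K" "a3 \<in> K" "b1 \<in> K" "bt \<in> K" "p1 \<in> K" "p2 \<in> K" "p3 \<in> K" "q1 \<in> K" "qt \<in> K" "xt \<in> K" "z2 \<in> K" "z3 \<in> K"
  shows False
proof -
  note g0 = eokE[OF e(1)]
  note h0_0 = eokD[OF e(1) K(1)]
  note h0_1 = eokD[OF e(1) K(2)]
  note h0_2 = eokD[OF e(1) K(3)]
  note h0_3 = eokD[OF e(1) K(4)]
  note h0_4 = eokD[OF e(1) K(5)]
  note h0_5 = eokD[OF e(1) K(6)]
  note h0_6 = eokD[OF e(1) K(7)]
  note h0_7 = eokD[OF e(1) K(8)]
  note h0_8 = eokD[OF e(1) K(9)]
  note h0_9 = eokD[OF e(1) K(10)]
  note h0_10 = eokD[OF e(1) K(11)]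
  note h0_11 = eokD[OF e(1) K(12)]
  note h0_12 = eokD[OF e(1) K(13)]
  note g1 = eokE[OF e(2)]
  note h1_0 = eokD[OF e(2) K(1)]
  note h1_1 = eokD[OF e(2) K(2)]
  note h1_2 = eokD[OF e(2) K(3)]
  note h1_3 = eokD[OF e(2) K(4)]
  note h1_4 = eokD[OF e(2) K(5)]
  note h1_5 = eokD[OF e(2) K(6)]
  note h1_6 = eokD[OF e(2) K(7)]
  note h1_7 = eokD[OF e(2) K(8)]
  note h1_8 = eokD[OF e(2) K(9)]
  note h1_9 = eokD[OF e(2) K(10)]
  note h1_10 = eokD[OF e(2) K(11)]
  note h1_11 = eokD[OF e(2) K(12)]
  note h1_12 = eokD[OF e(2) K(13)]
  note g2 = eokE[OF e(3)]
  note h2_0 = eokD[OF e(3) K(1)]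
  note h2_1 = eokD[OF e(3) K(2)]
  note h2_2 = eokD[OF e(3) K(3)]
  note h2_3 = eokD[OF e(3) K(4)]
  note h2_4 = eokD[OF e(3) K(5)]
  note h2_5 = eokD[OF e(3) K(6)]
  note h2_6 = eokD[OF e(3) K(7)]
  note h2_7 = eokD[OF e(3) K(8)]
  note h2_8 = eokD[OF e(3) K(9)]
  note h2_9 = eokD[OF e(3) K(10)]
  note h2_10 = eokD[OF e(3) K(11)]
  note h2_11 = eokD[OF e(3) K(12)]
  note h2_12 = eokD[OF e(3) K(13)]
  note g3 = eokE[OF e(4)]
  note h3_0 = eokD[OF e(4) K(1)]
  note h3_1 = eokD[OF e(4) K(2)]
  note h3_2 = eokD[OF e(4) K(3)]
  note h3_3 = eokD[OF e(4) K(4)]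
  note h3_4 = eokD[OF e(4) K(5)]
  note h3_5 = eokD[OF e(4) K(6)]
  note h3_6 = eokD[OF e(4) K(7)]
  note h3_7 = eokD[OF e(4) K(8)]
  note h3_8 = eokD[OF e(4) K(9)]
  note h3_9 = eokD[OF e(4) K(10)]
  note h3_10 = eokD[OF e(4) K(11)]
  note h3_11 = eokD[OF e(4) K(12)]
  note h3_12 = eokD[OF e(4) K(13)]
  note g4 = eokE[OF e(5)]
  note h4_0 = eokD[OF e(5) K(1)]
  note h4_1 = eokD[OF e(5) K(2)]
  note h4_2 = eokD[OF e(5) K(3)]
  note h4_3 = eokD[OF e(5) K(4)]
  note h4_4 = eokD[OF e(5) K(5)]
  note h4_5 = eokD[OF e(5) K(6)]
  note h4_6 = eokD[OF e(5) K(7)]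
  note h4_7 = eokD[OF e(5) K(8)]
  note h4_8 = eokD[OF e(5) K(9)]
  note h4_9 = eokD[OF e(5) K(10)]
  note h4_10 = eokD[OF e(5) K(11)]
  note h4_11 = eokD[OF e(5) K(12)]
  note h4_12 = eokD[OF e(5) K(13)]
  show False using g0 h0_0 h0_1 h0_2 h0_3 h0_4 h0_5 h0_6 h0_7 h0_8 h0_9 h0_10 h0_11 h0_12 g1 h1_0 h1_1 h1_2 h1_3 h1_4 h1_5 h1_6 h1_7 h1_8 h1_9 h1_10 h1_11 h1_12 g2 h2_0 h2_1 h2_2 h2_3 h2_4 h2_5 h2_6 h2_7 h2_8 h2_9 h2_10 h2_11 h2_12 g3 h3_0 h3_1 h3_2 h3_3 h3_4 h3_5 h3_6 h3_7 h3_8 h3_9 h3_10 h3_11 h3_12 g4 h4_0 h4_1 h4_2 h4_3 h4_4 h4_5 h4_6 h4_7 h4_8 h4_9 h4_10 h4_11 h4_12 s x d by (smt (z3))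
qed

lemma abs_S221:
  assumes e: "eok K X Y1 a1 p1" "eok K X Y2 a2 p2" "eok K X Y3 a3 p3" "eok K Z1 Y1 b1 q1" "eok K Z2 Y2 b2 q2"
  and s: "p1 = a2 \<or> p2 = a1" "p1 = a3 \<or> p3 = a1" "p2 = a3 \<or> p3 = a2" "p1 = b1 \<or> q1 = a1" "p2 = b2 \<or> q2 = a2"
  and x: "u12 \<in> Z1" "u12 \<in> Y2" "u13 \<in> Z1" "u13 \<in> Y3" "u21 \<in> Z2" "u21 \<in> Y1" "u23 \<in> Z2" "u23 \<in> Y3"
  and d: "a1 \<noteq> a2" "a1 \<noteq> a3" "a2 \<noteq> a3" "b1 \<noteq> u12" "b1 \<noteq> u13" "u12 \<noteq> u13" "u21 \<noteq> b2" "u21 \<noteq> u23" "b2 \<noteq> u23" "a1 \<noteq> b1" "a1 \<noteq> u21" "b1 \<noteq> u21" "a2 \<noteq> u12" "a2 \<noteq> b2" "u12 \<noteq> b2" "a3 \<noteq> u13" "a3 \<noteq> u23" "u13 \<noteq> u23"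
  and K: "a1 \<in> K" "a2 \<in> K" "a3 \<in> K" "b1 \<in> K" "b2 \<in> K" "p1 \<in> K" "p2 \<in> K" "p3 \<in> K" "q1 \<in> K" "q2 \<in> K" "u12 \<in> K" "u13 \<in> K" "u21 \<in> K" "u23 \<in> K"
  shows False
proof -
  note g0 = eokE[OF e(1)]
  note h0_0 = eokD[OF e(1) K(1)]
  note h0_1 = eokD[OF e(1) K(2)]
  note h0_2 = eokD[OF e(1) K(3)]
  note h0_3 = eokD[OF e(1) K(4)]
  note h0_4 = eokD[OF e(1) K(5)]
  note h0_5 = eokD[OF e(1) K(6)]
  note h0_6 = eokD[OF e(1) K(7)]
  note h0_7 = eokD[OF e(1) K(8)]
  note h0_8 = eokD[OF e(1) K(9)]
  note h0_9 = eokD[OF e(1) K(10)]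
  note h0_10 = eokD[OF e(1) K(11)]
  note h0_11 = eokD[OF e(1) K(12)]
  note h0_12 = eokD[OF e(1) K(13)]
  note h0_13 = eokD[OF e(1) K(14)]
  note g1 = eokE[OF e(2)]
  note h1_0 = eokD[OF e(2) K(1)]
  note h1_1 = eokD[OF e(2) K(2)]
  note h1_2 = eokD[OF e(2) K(3)]
  note h1_3 = eokD[OF e(2) K(4)]
  note h1_4 = eokD[OF e(2) K(5)]
  note h1_5 = eokD[OF e(2) K(6)]
  note h1_6 = eokD[OF e(2) K(7)]
  note h1_7 = eokD[OF e(2) K(8)]
  note h1_8 = eokD[OF e(2) K(9)]
  note h1_9 = eokD[OF e(2) K(10)]
  note h1_10 = eokD[OF e(2) K(11)]
  note h1_11 = eokD[OF e(2) K(12)]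
  note h1_12 = eokD[OF e(2) K(13)]
  note h1_13 = eokD[OF e(2) K(14)]
  note g2 = eokE[OF e(3)]
  note h2_0 = eokD[OF e(3) K(1)]
  note h2_1 = eokD[OF e(3) K(2)]
  note h2_2 = eokD[OF e(3) K(3)]
  note h2_3 = eokD[OF e(3) K(4)]
  note h2_4 = eokD[OF e(3) K(5)]
  note h2_5 = eokD[OF e(3) K(6)]
  note h2_6 = eokD[OF e(3) K(7)]
  note h2_7 = eokD[OF e(3) K(8)]
  note h2_8 = eokD[OF e(3) K(9)]
  note h2_9 = eokD[OF e(3) K(10)]
  note h2_10 = eokD[OF e(3) K(11)]
  note h2_11 = eokD[OF e(3) K(12)]
  note h2_12 = eokD[OF e(3) K(13)]
  note h2_13 = eokD[OF e(3) K(14)]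
  note g3 = eokE[OF e(4)]
  note h3_0 = eokD[OF e(4) K(1)]
  note h3_1 = eokD[OF e(4) K(2)]
  note h3_2 = eokD[OF e(4) K(3)]
  note h3_3 = eokD[OF e(4) K(4)]
  note h3_4 = eokD[OF e(4) K(5)]
  note h3_5 = eokD[OF e(4) K(6)]
  note h3_6 = eokD[OF e(4) K(7)]
  note h3_7 = eokD[OF e(4) K(8)]
  note h3_8 = eokD[OF e(4) K(9)]
  note h3_9 = eokD[OF e(4) K(10)]
  note h3_10 = eokD[OF e(4) K(11)]
  note h3_11 = eokD[OF e(4) K(12)]
  note h3_12 = eokD[OF e(4) K(13)]
  note h3_13 = eokD[OF e(4) K(14)]
  note g4 = eokE[OF e(5)]
  note h4_0 = eokD[OF e(5) K(1)]
  note h4_1 = eokD[OF e(5) K(2)]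
  note h4_2 = eokD[OF e(5) K(3)]
  note h4_3 = eokD[OF e(5) K(4)]
  note h4_4 = eokD[OF e(5) K(5)]
  note h4_5 = eokD[OF e(5) K(6)]
  note h4_6 = eokD[OF e(5) K(7)]
  note h4_7 = eokD[OF e(5) K(8)]
  note h4_8 = eokD[OF e(5) K(9)]
  note h4_9 = eokD[OF e(5) K(10)]
  note h4_10 = eokD[OF e(5) K(11)]
  note h4_11 = eokD[OF e(5) K(12)]
  note h4_12 = eokD[OF e(5) K(13)]
  note h4_13 = eokD[OF e(5) K(14)]
  show False using g0 h0_0 h0_1 h0_2 h0_3 h0_4 h0_5 h0_6 h0_7 h0_8 h0_9 h0_10 h0_11 h0_12 h0_13 g1 h1_0 h1_1 h1_2 h1_3 h1_4 h1_5 h1_6 h1_7 h1_8 h1_9 h1_10 h1_11 h1_12 h1_13 g2 h2_0 h2_1 h2_2 h2_3 h2_4 h2_5 h2_6 h2_7 h2_8 h2_9 h2_10 h2_11 h2_12 h2_13 g3 h3_0 h3_1 h3_2 h3_3 h3_4 h3_5 h3_6 h3_7 h3_8 h3_9 h3_10 h3_11 h3_12 h3_13 g4 h4_0 h4_1 h4_2 h4_3 h4_4 h4_5 h4_6 h4_7 h4_8 h4_9 h4_10 h4_11 h4_12 h4_13 s x d by (smt (z3))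
qed

lemma abs_DS:
  assumes e: "eok K X Y a0 p0" "eok K X Y1 a1 p1" "eok K X Y2 a2 p2" "eok K X1 Y b1 q1" "eok K X2 Y b2 q2"
  and s: "p0 = a1 \<or> p1 = a0" "p0 = a2 \<or> p2 = a0" "p1 = a2 \<or> p2 = a1" "p0 = b1 \<or> q1 = a0" "p0 = b2 \<or> q2 = a0" "q1 = b2 \<or> q2 = b1"
  and x: "u11 \<in> X1" "u11 \<in> Y1" "u12 \<in> X1" "u12 \<in> Y2" "u21 \<in> X2" "u21 \<in> Y1" "u22 \<in> X2" "u22 \<in> Y2"
  and d: "a0 \<noteq> a1" "a0 \<noteq> a2" "a1 \<noteq> a2" "b1 \<noteq> u11" "b1 \<noteq> u12" "u11 \<noteq> u12" "b2 \<noteq> u21" "b2 \<noteq> u22" "u21 \<noteq> u22" "a0 \<noteq> b1" "a0 \<noteq> b2" "b1 \<noteq> b2" "a1 \<noteq> u11" "a1 \<noteq> u21" "u11 \<noteq> u21" "a2 \<noteq> u12" "a2 \<noteq> u22" "u12 \<noteq> u22"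
  and K: "a0 \<in> K" "a1 \<in> K" "a2 \<in> K" "b1 \<in> K" "b2 \<in> K" "p0 \<in> K" "p1 \<in> K" "p2 \<in> K" "q1 \<in> K" "q2 \<in> K" "u11 \<in> K" "u12 \<in> K" "u21 \<in> K" "u22 \<in> K"
  shows False
proof -
  note g0 = eokE[OF e(1)]
  note h0_0 = eokD[OF e(1) K(1)]
  note h0_1 = eokD[OF e(1) K(2)]
  note h0_2 = eokD[OF e(1) K(3)]
  note h0_3 = eokD[OF e(1) K(4)]
  note h0_4 = eokD[OF e(1) K(5)]
  note h0_5 = eokD[OF e(1) K(6)]
  note h0_6 = eokD[OF e(1) K(7)]
  note h0_7 = eokD[OF e(1) K(8)]
  note h0_8 = eokD[OF e(1) K(9)]
  note h0_9 = eokD[OF e(1) K(10)]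
  note h0_10 = eokD[OF e(1) K(11)]
  note h0_11 = eokD[OF e(1) K(12)]
  note h0_12 = eokD[OF e(1) K(13)]
  note h0_13 = eokD[OF e(1) K(14)]
  note g1 = eokE[OF e(2)]
  note h1_0 = eokD[OF e(2) K(1)]
  note h1_1 = eokD[OF e(2) K(2)]
  note h1_2 = eokD[OF e(2) K(3)]
  note h1_3 = eokD[OF e(2) K(4)]
  note h1_4 = eokD[OF e(2) K(5)]
  note h1_5 = eokD[OF e(2) K(6)]
  note h1_6 = eokD[OF e(2) K(7)]
  note h1_7 = eokD[OF e(2) K(8)]
  note h1_8 = eokD[OF e(2) K(9)]
  note h1_9 = eokD[OF e(2) K(10)]
  note h1_10 = eokD[OF e(2) K(11)]
  note h1_11 = eokD[OF e(2) K(12)]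
  note h1_12 = eokD[OF e(2) K(13)]
  note h1_13 = eokD[OF e(2) K(14)]
  note g2 = eokE[OF e(3)]
  note h2_0 = eokD[OF e(3) K(1)]
  note h2_1 = eokD[OF e(3) K(2)]
  note h2_2 = eokD[OF e(3) K(3)]
  note h2_3 = eokD[OF e(3) K(4)]
  note h2_4 = eokD[OF e(3) K(5)]
  note h2_5 = eokD[OF e(3) K(6)]
  note h2_6 = eokD[OF e(3) K(7)]
  note h2_7 = eokD[OF e(3) K(8)]
  note h2_8 = eokD[OF e(3) K(9)]
  note h2_9 = eokD[OF e(3) K(10)]
  note h2_10 = eokD[OF e(3) K(11)]
  note h2_11 = eokD[OF e(3) K(12)]
  note h2_12 = eokD[OF e(3) K(13)]
  note h2_13 = eokD[OF e(3) K(14)]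
  note g3 = eokE[OF e(4)]
  note h3_0 = eokD[OF e(4) K(1)]
  note h3_1 = eokD[OF e(4) K(2)]
  note h3_2 = eokD[OF e(4) K(3)]
  note h3_3 = eokD[OF e(4) K(4)]
  note h3_4 = eokD[OF e(4) K(5)]
  note h3_5 = eokD[OF e(4) K(6)]
  note h3_6 = eokD[OF e(4) K(7)]
  note h3_7 = eokD[OF e(4) K(8)]
  note h3_8 = eokD[OF e(4) K(9)]
  note h3_9 = eokD[OF e(4) K(10)]
  note h3_10 = eokD[OF e(4) K(11)]
  note h3_11 = eokD[OF e(4) K(12)]
  note h3_12 = eokD[OF e(4) K(13)]
  note h3_13 = eokD[OF e(4) K(14)]
  note g4 = eokE[OF e(5)]
  note h4_0 = eokD[OF e(5) K(1)]
  note h4_1 = eokD[OF e(5) K(2)]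
  note h4_2 = eokD[OF e(5) K(3)]
  note h4_3 = eokD[OF e(5) K(4)]
  note h4_4 = eokD[OF e(5) K(5)]
  note h4_5 = eokD[OF e(5) K(6)]
  note h4_6 = eokD[OF e(5) K(7)]
  note h4_7 = eokD[OF e(5) K(8)]
  note h4_8 = eokD[OF e(5) K(9)]
  note h4_9 = eokD[OF e(5) K(10)]
  note h4_10 = eokD[OF e(5) K(11)]
  note h4_11 = eokD[OF e(5) K(12)]
  note h4_12 = eokD[OF e(5) K(13)]
  note h4_13 = eokD[OF e(5) K(14)]
  show False using g0 h0_0 h0_1 h0_2 h0_3 h0_4 h0_5 h0_6 h0_7 h0_8 h0_9 h0_10 h0_11 h0_12 h0_13 g1 h1_0 h1_1 h1_2 h1_3 h1_4 h1_5 h1_6 h1_7 h1_8 h1_9 h1_10 h1_11 h1_12 h1_13 g2 h2_0 h2_1 h2_2 h2_3 h2_4 h2_5 h2_6 h2_7 h2_8 h2_9 h2_10 h2_11 h2_12 h2_13 g3 h3_0 h3_1 h3_2 h3_3 h3_4 h3_5 h3_6 h3_7 h3_8 h3_9 h3_10 h3_11 h3_12 h3_13 g4 h4_0 h4_1 h4_2 h4_3 h4_4 h4_5 h4_6 h4_7 h4_8 h4_9 h4_10 h4_11 h4_12 h4_13 s x d by (smt (z3))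
qed

lemma abs_C4:
  assumes e: "eok K Ri Cj al pe" "eok K Ri Cj2 be pf" "eok K Ri2 Cj2 ga pg" "eok K Ri2 Cj de ph"
  and d: "al \<noteq> be" "be \<noteq> ga" "ga \<noteq> de" "de \<noteq> al"
  and s: "be \<in> Cj \<or> al \<in> Cj2" "de \<in> Ri \<or> al \<in> Ri2"
  and r: "(de \<in> Ri \<and> de \<noteq> al \<and> de \<noteq> be) \<or> (de \<in> Cj \<and> de \<noteq> al \<and> de \<noteq> de) \<or> (al \<in> Ri \<and> al \<noteq> al \<and> al \<noteq> be) \<or> (al \<in> Cj2 \<and> al \<noteq> be \<and> al \<noteq> ga) \<or> (be \<in> Ri2 \<and> be \<noteq> ga \<and> be \<noteq> de) \<or> (be \<in> Cj2 \<and> be \<noteq> be \<and> be \<noteq> ga) \<or> (ga \<in> Ri2 \<and> ga \<noteq> ga \<and> ga \<noteq> de) \<or> (ga \<in> Cj \<and> ga \<noteq> al \<and> ga \<noteq> de)" "(be \<in> Ri \<and> be \<noteq> al \<and> be \<noteq> be) \<or> (be \<in> Cj \<and> be \<noteq> al \<and> be \<noteq> de) \<or> (ga \<in> Ri \<and> ga \<noteq> al \<and> ga \<noteq> be) \<or> (ga \<in> Cj2 \<and> ga \<noteq> be \<and> ga \<noteq> ga) \<or> (de \<in> Ri2 \<and> de \<noteq> ga \<and> de \<noteq> de) \<or> (de \<in> Cj2 \<and> de \<noteq> be \<and> de \<noteq> ga) \<or> (al \<in> Ri2 \<and> al \<noteq> ga \<and> al \<noteq> de) \<or> (al \<in> Cj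 \<and> al \<noteq> al \<and> al \<noteq> de)"
  and K: "al \<in> K" "be \<in> K" "ga \<in> K" "de \<in> K" "pe \<in> K" "pf \<in> K" "pg \<in> K" "ph \<in> K"
  shows False
proof -
  note g0 = eokE[OF e(1)]
  note h0_0 = eokD[OF e(1) K(1)]
  note h0_1 = eokD[OF e(1) K(2)]
  note h0_2 = eokD[OF e(1) K(3)]
  note h0_3 = eokD[OF e(1) K(4)]
  note h0_4 = eokD[OF e(1) K(5)]
  note h0_5 = eokD[OF e(1) K(6)]
  note h0_6 = eokD[OF e(1) K(7)]
  note h0_7 = eokD[OF e(1) K(8)]
  note g1 = eokE[OF e(2)]
  note h1_0 = eokD[OF e(2) K(1)]
  note h1_1 = eokD[OF e(2) K(2)]
  note h1_2 = eokD[OF e(2) K(3)]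
  note h1_3 = eokD[OF e(2) K(4)]
  note h1_4 = eokD[OF e(2) K(5)]
  note h1_5 = eokD[OF e(2) K(6)]
  note h1_6 = eokD[OF e(2) K(7)]
  note h1_7 = eokD[OF e(2) K(8)]
  note g2 = eokE[OF e(3)]
  note h2_0 = eokD[OF e(3) K(1)]
  note h2_1 = eokD[OF e(3) K(2)]
  note h2_2 = eokD[OF e(3) K(3)]
  note h2_3 = eokD[OF e(3) K(4)]
  note h2_4 = eokD[OF e(3) K(5)]
  note h2_5 = eokD[OF e(3) K(6)]
  note h2_6 = eokD[OF e(3) K(7)]
  note h2_7 = eokD[OF e(3) K(8)]
  note g3 = eokE[OF e(4)]
  note h3_0 = eokD[OF e(4) K(1)]
  note h3_1 = eokD[OF e(4) K(2)]
  note h3_2 = eokD[OF e(4) K(3)]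
  note h3_3 = eokD[OF e(4) K(4)]
  note h3_4 = eokD[OF e(4) K(5)]
  note h3_5 = eokD[OF e(4) K(6)]
  note h3_6 = eokD[OF e(4) K(7)]
  note h3_7 = eokD[OF e(4) K(8)]
  show False using g0 h0_0 h0_1 h0_2 h0_3 h0_4 h0_5 h0_6 h0_7 g1 h1_0 h1_1 h1_2 h1_3 h1_4 h1_5 h1_6 h1_7 g2 h2_0 h2_1 h2_2 h2_3 h2_4 h2_5 h2_6 h2_7 g3 h3_0 h3_1 h3_2 h3_3 h3_4 h3_5 h3_6 h3_7 d s r by (smt (z3))
qed

lemma Lset_D:
  assumes "c \<in> Lset n k" "i < n" "j < n"
  shows "\<exists>v. c (i,j) = Some v \<and> 1 \<le> v \<and> v \<le> k"
proof -
  have "(i,j) \<in> dom c" using assms unfolding Lset_def cells_def by auto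
  then obtain v where v: "c (i,j) = Some v" by auto
  then have "v \<in> ran c" by (auto simp: ran_def)
  then show ?thesis using v assms(1) unfolding Lset_def by auto
qed

lemma Lset_None:
  assumes "c \<in> Lset n k" "z \<notin> cells n"
  shows "c z = None"
  using assms unfolding Lset_def by auto

lemma Lset_intro:
  assumes "\<And>i j. i < n \<Longrightarrow> j < n \<Longrightarrow> \<exists>v. c (i,j) = Some v \<and> 1 \<le> v \<and> v \<le> k"
  and "\<And>z. z \<notin> cells n \<Longrightarrow> c z = None"
  and "\<And>i j j'. i < n \<Longrightarrow> j < n \<Longrightarrow> j' < n \<Longrightarrow> j \<noteq> j' \<Longrightarrow> c (i,j) \<noteq> c (i,j')"
  and "\<And>i i' j. i < n \<Longrightarrow> i' < n \<Longrightarrow> j < n \<Longrightarrow> i \<noteq> i' \<Longrightarrow> c (i,j) \<noteq> c (i',j)"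
  shows "c \<in> Lset n k"
proof -
  have dom: "dom c = cells n"
  proof
    show "dom c \<subseteq> cells n" using assms(2) by (metis domIff subsetI)
    show "cells n \<subseteq> dom c" using assms(1) by (fastforce simp: cells_def)
  qed
  have ran: "ran c \<subseteq> {1..k}"
  proof
    fix v assume "v \<in> ran c"
    then obtain z where z: "c z = Some v" by (auto simp: ran_def)
    then have "z \<in> cells n" using assms(2) by fastforce
    then obtain i j where "z = (i,j)" "i < n" "j < n" by (auto simp: cells_def)
    then show "v \<in> {1..k}" using assms(1)[of i j] z by auto
  qed
  show ?thesis unfolding Lset_def using dom ran assms(3,4) by blast
qed

lemma Lset_row:
  assumes "c \<in> Lset n k" "i < n" "j < n" "j' < n" "j \<noteq> j'"
  shows "c (i,j) \<noteq> c (i,j')"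
  using assms unfolding Lset_def by blast

lemma Lset_col:
  assumes "c \<in> Lset n k" "i < n" "i' < n" "j < n" "i \<noteq> i'"
  shows "c (i,j) \<noteq> c (i',j)"
  using assms unfolding Lset_def by blast

lemma eok_sym: "eok K A B a p \<Longrightarrow> eok K B A a p"
  unfolding eok_def by blast

locale LB =
  fixes n k :: nat and c :: "nat \<times> nat \<rightharpoonup> nat" and U :: "(nat \<times> nat) set"
  assumes cL: "c \<in> Lset n k" and kn: "k = 2*n - 2" and n1: "1 \<le> n" and Usub: "U \<subseteq> cells n"
  and uniq: "\<And>c2. c2 \<in> Lset n k \<Longrightarrow> (\<And>z. z \<notin> U \<Longrightarrow> c2 z = c z) \<Longrightarrow> c2 = c"
begin

definition v :: "nat \<Rightarrow> nat \<Rightarrow> nat" where "v i j = the (c (i,j))"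
definition R :: "nat \<Rightarrow> nat set" where "R i = (\<lambda>j. v i j) ` {..<n}"
definition C :: "nat \<Rightarrow> nat set" where "C j = (\<lambda>i. v i j) ` {..<n}"
abbreviation K where "K \<equiv> {1..k}"

lemma cv: "i < n \<Longrightarrow> j < n \<Longrightarrow> c (i,j) = Some (v i j)"
  using Lset_D[OF cL] unfolding v_def by fastforce

lemma vK: "i < n \<Longrightarrow> j < n \<Longrightarrow> v i j \<in> K"
  using Lset_D[OF cL, of i j] cv by fastforce

lemma vrow: "i < n \<Longrightarrow> j < n \<Longrightarrow> j' < n \<Longrightarrow> j \<noteq> j' \<Longrightarrow> v i j \<noteq> v i j'"
  using Lset_row[OF cL] cv by metis

lemma vcol: "i < n \<Longrightarrow> i' < n \<Longrightarrow> j < n \<Longrightarrow> i \<noteq> i' \<Longrightarrow> v i j \<noteq> v i' j"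
  using Lset_col[OF cL] cv by metis

lemma inU: "(i,j) \<in> U \<Longrightarrow> i < n \<and> j < n"
  using Usub by (auto simp: cells_def)

lemma RI: "i < n \<Longrightarrow> j < n \<Longrightarrow> v i j \<in> R i" unfolding R_def by auto
lemma CI: "i < n \<Longrightarrow> j < n \<Longrightarrow> v i j \<in> C j" unfolding C_def by auto

lemma modify:
  assumes D: "D \<subseteq> U" and w: "\<And>z. z \<in> D \<Longrightarrow> w z \<in> K"
  and rowD: "\<And>i j j'. (i,j) \<in> D \<Longrightarrow> (i,j') \<in> D \<Longrightarrow> j \<noteq> j' \<Longrightarrow> w (i,j) \<noteq> w (i,j')"
  and colD: "\<And>i i' j. (i,j) \<in> D \<Longrightarrow> (i',j) \<in> D \<Longrightarrow> i \<noteq> i' \<Longrightarrow> w (i,j) \<noteq> w (i',j)"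
  and rowO: "\<And>i j j'. (i,j) \<in> D \<Longrightarrow> (i,j') \<notin> D \<Longrightarrow> j' < n \<Longrightarrow> w (i,j) \<noteq> v i j'"
  and colO: "\<And>i i' j. (i,j) \<in> D \<Longrightarrow> (i',j) \<notin> D \<Longrightarrow> i' < n \<Longrightarrow> w (i,j) \<noteq> v i' j"
  shows "\<And>i j. (i,j) \<in> D \<Longrightarrow> w (i,j) = v i j"
proof -
  define c2 where "c2 = (\<lambda>z. if z \<in> D then Some (w z) else c z)"
  have DU: "z \<in> D \<Longrightarrow> fst z < n \<and> snd z < n" for z using D inU by (cases z) auto
  have "c2 \<in> Lset n k"
  proof (rule Lset_intro)
    show "\<exists>x. c2 (i,j) = Some x \<and> 1 \<le> x \<and> x \<le> k" if "i < n" "j < n" for i j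
    proof (cases "(i,j) \<in> D")
      case True then show ?thesis using w[of "(i,j)"] unfolding c2_def by simp
    next
      case False then show ?thesis using vK[OF that] cv[OF that] unfolding c2_def by simp
    qed
    show "c2 z = None" if "z \<notin> cells n" for z
    proof -
      have "z \<notin> D" using that DU[of z] unfolding cells_def by (cases z) auto
      then show ?thesis using Lset_None[OF cL that] unfolding c2_def by simp
    qed
    show "c2 (i,j) \<noteq> c2 (i,j')" if "i < n" "j < n" "j' < n" "j \<noteq> j'" for i j j'
    proof (cases "(i,j) \<in> D"; cases "(i,j') \<in> D")
      assume "(i,j) \<in> D" "(i,j') \<in> D" then show ?thesis using rowD[of i j j'] that unfolding c2_def by simp
    next
      assume "(i,j) \<in> D" "(i,j') \<notin> D" then show ?thesis using rowO[of i j j'] that cv[of i j'] unfolding c2_def by simp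
    next
      assume "(i,j) \<notin> D" "(i,j') \<in> D" then show ?thesis using rowO[of i j' j] that cv[of i j] unfolding c2_def by simp
    next
      assume "(i,j) \<notin> D" "(i,j') \<notin> D" then show ?thesis using Lset_row[OF cL that] unfolding c2_def by simp
    qed
    show "c2 (i,j) \<noteq> c2 (i',j)" if "i < n" "i' < n" "j < n" "i \<noteq> i'" for i i' j
    proof (cases "(i,j) \<in> D"; cases "(i',j) \<in> D")
      assume "(i,j) \<in> D" "(i',j) \<in> D" then show ?thesis using colD[of i j i'] that unfolding c2_def by simp
    next
      assume "(i,j) \<in> D" "(i',j) \<notin> D" then show ?thesis using colO[of i j i'] that cv[of i' j] unfolding c2_def by simp
    next
      assume "(i,j) \<notin> D" "(i',j) \<in> D" then show ?thesis using colO[of i' j i] that cv[of i j] unfolding c2_def by simp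
    next
      assume "(i,j) \<notin> D" "(i',j) \<notin> D" then show ?thesis using Lset_col[OF cL that] unfolding c2_def by simp
    qed
  qed
  moreover have "c2 z = c z" if "z \<notin> U" for z using that D unfolding c2_def by auto
  ultimately have "c2 = c" using uniq by blast
  show "w (i,j) = v i j" if "(i,j) \<in> D" for i j
  proof -
    have "c2 (i,j) = Some (w (i,j))" using that unfolding c2_def by simp
    moreover have "c (i,j) = Some (v i j)" using DU[OF that] cv by simp
    ultimately show ?thesis using \<open>c2 = c\<close> by simp
  qed
qed

lemma tight:
  assumes "(i,j) \<in> U" "t \<in> K"
  shows "t \<in> R i \<or> t \<in> C j"
proof (rule ccontr)
  assume nt: "\<not> (t \<in> R i \<or> t \<in> C j)"
  have ij: "i < n" "j < n" using inU[OF assms(1)] by auto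
  have "(\<lambda>_. t) (i,j) = v i j"
  proof (rule modify[of "{(i,j)}" "\<lambda>_. t"])
    show "(i, j) \<in> {(i, j)}" by simp
    show "{(i, j)} \<subseteq> U" using assms by simp
    show "\<And>z. z \<in> {(i, j)} \<Longrightarrow> t \<in> K" using assms by simp
    show "\<And>i' j1 j2. (i', j1) \<in> {(i, j)} \<Longrightarrow> (i', j2) \<in> {(i, j)} \<Longrightarrow> j1 \<noteq> j2 \<Longrightarrow> t \<noteq> t" by simp
    show "\<And>i1 i2 j'. (i1, j') \<in> {(i, j)} \<Longrightarrow> (i2, j') \<in> {(i, j)} \<Longrightarrow> i1 \<noteq> i2 \<Longrightarrow> t \<noteq> t" by simp
    show "\<And>i' j1 j2. (i', j1) \<in> {(i, j)} \<Longrightarrow> (i', j2) \<notin> {(i, j)} \<Longrightarrow> j2 < n \<Longrightarrow> t \<noteq> v i' j2"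
      using nt RI ij by auto
    show "\<And>i1 i2 j'. (i1, j') \<in> {(i, j)} \<Longrightarrow> (i2, j') \<notin> {(i, j)} \<Longrightarrow> i2 < n \<Longrightarrow> t \<noteq> v i2 j'"
      using nt CI ij by auto
  qed
  then show False using nt RI[OF ij] by simp
qed

lemma RK: "R i \<subseteq> K" if "i < n" using vK that unfolding R_def by auto
lemma CK: "C j \<subseteq> K" if "j < n" using vK that unfolding C_def by auto

lemma cardR: "i < n \<Longrightarrow> card (R i) = n"
  unfolding R_def by (subst card_image) (auto intro!: inj_onI dest: vrow[of i])

lemma cardC: "j < n \<Longrightarrow> card (C j) = n"
  unfolding C_def by (subst card_image) (auto intro!: inj_onI dest: vcol[of _ _ j])

lemma partner:
  assumes "(i,j) \<in> U"
  shows "\<exists>p. eok K (R i) (C j) (v i j) p"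
proof -
  have ij: "i < n" "j < n" using inU[OF assms] by auto
  have un: "R i \<union> C j = K" using RK[OF ij(1)] CK[OF ij(2)] tight[OF assms] by blast
  have fin: "finite (R i)" "finite (C j)" unfolding R_def C_def by auto
  have "card (R i) + card (C j) = card (R i \<union> C j) + card (R i \<inter> C j)"
    using card_Un_Int[OF fin] .
  then have c2: "card (R i \<inter> C j) = 2" using cardR[OF ij(1)] cardC[OF ij(2)] un kn n1 by simp
  have a: "v i j \<in> R i \<inter> C j" using RI[OF ij] CI[OF ij] by simp
  obtain x y where xy: "R i \<inter> C j = {x,y}" "x \<noteq> y" using c2 by (meson card_2_iff)
  then obtain p where p: "R i \<inter> C j = {v i j, p}" "p \<noteq> v i j" using a by auto
  have "eok K (R i) (C j) (v i j) p"
    unfolding eok_def using p un by blast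
  then show ?thesis by blast
qed

lemma Srow:
  assumes e: "(i,j) \<in> U" and f: "(i,j') \<in> U" and jj: "j \<noteq> j'"
  shows "v i j' \<in> C j \<or> v i j \<in> C j'"
proof (rule ccontr)
  assume nc: "\<not> (v i j' \<in> C j \<or> v i j \<in> C j')"
  have ij: "i < n" "j < n" "j' < n" using inU[OF e] inU[OF f] by auto
  define w where "w = (\<lambda>z::nat\<times>nat. if z = (i,j) then v i j' else v i j)"
  have "w (i,j) = v i j"
  proof (rule modify[of "{(i,j),(i,j')}" w])
    show "{(i,j),(i,j')} \<subseteq> U" using e f by simp
    show "(i,j) \<in> {(i,j),(i,j')}" by simp
    show "\<And>z. z \<in> {(i,j),(i,j')} \<Longrightarrow> w z \<in> K" using vK ij unfolding w_def by auto
    show "\<And>i0 j1 j2. (i0,j1) \<in> {(i,j),(i,j')} \<Longrightarrow> (i0,j2) \<in> {(i,j),(i,j')} \<Longrightarrow> j1 \<noteq> j2 \<Longrightarrow> w (i0,j1) \<noteq> w (i0,j2)"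
      using vrow[OF ij(1) ij(2) ij(3) jj] unfolding w_def by auto
    show "\<And>i1 i2 j0. (i1,j0) \<in> {(i,j),(i,j')} \<Longrightarrow> (i2,j0) \<in> {(i,j),(i,j')} \<Longrightarrow> i1 \<noteq> i2 \<Longrightarrow> w (i1,j0) \<noteq> w (i2,j0)"
      using jj by auto
    show "\<And>i0 j1 j2. (i0,j1) \<in> {(i,j),(i,j')} \<Longrightarrow> (i0,j2) \<notin> {(i,j),(i,j')} \<Longrightarrow> j2 < n \<Longrightarrow> w (i0,j1) \<noteq> v i0 j2"
      using vrow ij jj unfolding w_def by auto
    show "\<And>i1 i2 j0. (i1,j0) \<in> {(i,j),(i,j')} \<Longrightarrow> (i2,j0) \<notin> {(i,j),(i,j')} \<Longrightarrow> i2 < n \<Longrightarrow> w (i1,j0) \<noteq> v i2 j0"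
    proof -
      fix i1 i2 j0 assume a: "(i1,j0) \<in> {(i,j),(i,j')}" "(i2,j0) \<notin> {(i,j),(i,j')}" "i2 < n"
      show "w (i1,j0) \<noteq> v i2 j0"
      proof (cases "j0 = j")
        case True then have "i1 = i" using a jj by auto
        then show ?thesis using True nc CI[OF a(3) ij(2)] unfolding w_def by auto
      next
        case False then have "i1 = i" "j0 = j'" using a by auto
        then show ?thesis using False nc CI[OF a(3) ij(3)] unfolding w_def by auto
      qed
    qed
  qed
  then show False using vrow[OF ij(1) ij(2) ij(3) jj] unfolding w_def by simp
qed

lemma Scol:
  assumes e: "(i,j) \<in> U" and f: "(i',j) \<in> U" and ii: "i \<noteq> i'"
  shows "v i' j \<in> R i \<or> v i j \<in> R i'"
proof (rule ccontr)
  assume nc: "\<not> (v i' j \<in> R i \<or> v i j \<in> R i')"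
  have ij: "i < n" "i' < n" "j < n" using inU[OF e] inU[OF f] by auto
  define w where "w = (\<lambda>z::nat\<times>nat. if z = (i,j) then v i' j else v i j)"
  have "w (i,j) = v i j"
  proof (rule modify[of "{(i,j),(i',j)}" w])
    show "{(i,j),(i',j)} \<subseteq> U" using e f by simp
    show "(i,j) \<in> {(i,j),(i',j)}" by simp
    show "\<And>z. z \<in> {(i,j),(i',j)} \<Longrightarrow> w z \<in> K" using vK ij unfolding w_def by auto
    show "\<And>i0 j1 j2. (i0,j1) \<in> {(i,j),(i',j)} \<Longrightarrow> (i0,j2) \<in> {(i,j),(i',j)} \<Longrightarrow> j1 \<noteq> j2 \<Longrightarrow> w (i0,j1) \<noteq> w (i0,j2)"
      using ii by auto
    show "\<And>i1 i2 j0. (i1,j0) \<in> {(i,j),(i',j)} \<Longrightarrow> (i2,j0) \<in> {(i,j),(i',j)} \<Longrightarrow> i1 \<noteq> i2 \<Longrightarrow> w (i1,j0) \<noteq> w (i2,j0)"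
      using vcol[OF ij(1) ij(2) ij(3) ii] unfolding w_def by auto
    show "\<And>i1 i2 j0. (i1,j0) \<in> {(i,j),(i',j)} \<Longrightarrow> (i2,j0) \<notin> {(i,j),(i',j)} \<Longrightarrow> i2 < n \<Longrightarrow> w (i1,j0) \<noteq> v i2 j0"
      using vcol ij ii unfolding w_def by auto
    show "\<And>i0 j1 j2. (i0,j1) \<in> {(i,j),(i',j)} \<Longrightarrow> (i0,j2) \<notin> {(i,j),(i',j)} \<Longrightarrow> j2 < n \<Longrightarrow> w (i0,j1) \<noteq> v i0 j2"
    proof -
      fix i0 j1 j2 assume a: "(i0,j1) \<in> {(i,j),(i',j)}" "(i0,j2) \<notin> {(i,j),(i',j)}" "j2 < n"
      show "w (i0,j1) \<noteq> v i0 j2"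
      proof (cases "i0 = i")
        case True then have "j1 = j" using a ii by auto
        then show ?thesis using True nc RI[OF ij(1) a(3)] unfolding w_def by auto
      next
        case False then have "i0 = i'" "j1 = j" using a by auto
        then show ?thesis using False nc RI[OF ij(2) a(3)] unfolding w_def by auto
      qed
    qed
  qed
  then show False using vcol[OF ij(1) ij(2) ij(3) ii] unfolding w_def by simp
qed

lemma eok_in: "eok K A B a p \<Longrightarrow> t \<in> A \<Longrightarrow> t \<in> B \<Longrightarrow> t \<noteq> a \<Longrightarrow> t = p"
  unfolding eok_def by blast

lemma Sp_row:
  assumes "(i,j) \<in> U" "(i,j') \<in> U" "j \<noteq> j'"
    "eok K (R i) (C j) (v i j) p1" "eok K (R i) (C j') (v i j') p2"
  shows "p1 = v i j' \<or> p2 = v i j"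
proof -
  have ij: "i < n" "j < n" "j' < n" using inU assms(1,2) by auto
  have d: "v i j' \<noteq> v i j" using vrow[OF ij(1) ij(3) ij(2)] assms(3) by auto
  show ?thesis using Srow[OF assms(1-3)] eok_in[OF assms(4) RI[OF ij(1) ij(3)] _ d]
     eok_in[OF assms(5) RI[OF ij(1) ij(2)] _ d[symmetric]] by auto
qed

lemma Sp_col:
  assumes "(i,j) \<in> U" "(i',j) \<in> U" "i \<noteq> i'"
    "eok K (R i) (C j) (v i j) p1" "eok K (R i') (C j) (v i' j) p2"
  shows "p1 = v i' j \<or> p2 = v i j"
proof -
  have ij: "i < n" "i' < n" "j < n" using inU assms(1,2) by auto
  have d: "v i' j \<noteq> v i j" using vcol[OF ij(2) ij(1) ij(3)] assms(3) by auto
  show ?thesis using Scol[OF assms(1-3)] eok_in[OF assms(4) _ CI[OF ij(2) ij(3)] d]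
     eok_in[OF assms(5) _ CI[OF ij(1) ij(3)] d[symmetric]] by auto
qed

lemma rect_alt:
  assumes e: "(i,j) \<in> U" and f: "(i,j') \<in> U" and g: "(i',j') \<in> U" and h: "(i',j) \<in> U"
  and ii: "i \<noteq> i'" and jj: "j \<noteq> j'"
  and wK: "xe \<in> K" "xf \<in> K" "xg \<in> K" "xh \<in> K"
  and wd: "xe \<noteq> xf" "xg \<noteq> xh" "xe \<noteq> xh" "xf \<noteq> xg" and ch: "xe \<noteq> v i j"
  shows "(xe \<in> R i \<and> xe \<noteq> v i j \<and> xe \<noteq> v i j') \<or> (xe \<in> C j \<and> xe \<noteq> v i j \<and> xe \<noteq> v i' j) \<or>
         (xf \<in> R i \<and> xf \<noteq> v i j \<and> xf \<noteq> v i j') \<or> (xf \<in> C j' \<and> xf \<noteq> v i j' \<and> xf \<noteq> v i' j') \<or>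
         (xg \<in> R i' \<and> xg \<noteq> v i' j' \<and> xg \<noteq> v i' j) \<or> (xg \<in> C j' \<and> xg \<noteq> v i j' \<and> xg \<noteq> v i' j') \<or>
         (xh \<in> R i' \<and> xh \<noteq> v i' j' \<and> xh \<noteq> v i' j) \<or> (xh \<in> C j \<and> xh \<noteq> v i j \<and> xh \<noteq> v i' j)"
    (is "?conf")
proof (rule ccontr)
  assume nc: "\<not> ?conf"
  have ij: "i < n" "i' < n" "j < n" "j' < n" using inU[OF e] inU[OF g] by auto
  define D where "D = {(i,j),(i,j'),(i',j'),(i',j)}"
  define w where "w = (\<lambda>z::nat\<times>nat. if z = (i,j) then xe else if z = (i,j') then xf else if z = (i',j') then xg else xh)"
  have wv: "w (i,j) = xe" "w (i,j') = xf" "w (i',j') = xg" "w (i',j) = xh" unfolding w_def using ii jj by auto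
  have "w (i,j) = v i j"
  proof (rule modify[of D w])
    show "D \<subseteq> U" using e f g h unfolding D_def by simp
    show "(i,j) \<in> D" unfolding D_def by simp
    show "\<And>z. z \<in> D \<Longrightarrow> w z \<in> K" using wK wv unfolding D_def by auto
    show "\<And>i0 j1 j2. (i0,j1) \<in> D \<Longrightarrow> (i0,j2) \<in> D \<Longrightarrow> j1 \<noteq> j2 \<Longrightarrow> w (i0,j1) \<noteq> w (i0,j2)"
      using wd wv ii jj unfolding D_def by auto
    show "\<And>i1 i2 j0. (i1,j0) \<in> D \<Longrightarrow> (i2,j0) \<in> D \<Longrightarrow> i1 \<noteq> i2 \<Longrightarrow> w (i1,j0) \<noteq> w (i2,j0)"
      using wd wv ii jj unfolding D_def by auto
    show "\<And>i0 j1 j2. (i0,j1) \<in> D \<Longrightarrow> (i0,j2) \<notin> D \<Longrightarrow> j2 < n \<Longrightarrow> w (i0,j1) \<noteq> v i0 j2"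
    proof -
      fix i0 j1 j2 assume a: "(i0,j1) \<in> D" "(i0,j2) \<notin> D" "j2 < n"
      have i0: "i0 = i \<or> i0 = i'" and j2: "j2 \<noteq> j" "j2 \<noteq> j'" using a unfolding D_def by auto
      have r1: "v i j2 \<in> R i" "v i j2 \<noteq> v i j" "v i j2 \<noteq> v i j'"
        using RI[OF ij(1) a(3)] vrow[OF ij(1) a(3) ij(3) j2(1)] vrow[OF ij(1) a(3) ij(4) j2(2)] by auto
      have r2: "v i' j2 \<in> R i'" "v i' j2 \<noteq> v i' j" "v i' j2 \<noteq> v i' j'"
        using RI[OF ij(2) a(3)] vrow[OF ij(2) a(3) ij(3) j2(1)] vrow[OF ij(2) a(3) ij(4) j2(2)] by auto
      show "w (i0,j1) \<noteq> v i0 j2"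
      proof (cases "i0 = i")
        case True
        then have jj1: "j1 = j \<or> j1 = j'" using a ii unfolding D_def by auto
        show ?thesis
        proof
          assume eq: "w (i0,j1) = v i0 j2"
          from jj1 show False
          proof
            assume "j1 = j" then have "xe \<in> R i \<and> xe \<noteq> v i j \<and> xe \<noteq> v i j'" using eq r1 wv True by simp
            then have ?conf by blast then show False using nc by blast
          next
            assume "j1 = j'" then have "xf \<in> R i \<and> xf \<noteq> v i j \<and> xf \<noteq> v i j'" using eq r1 wv True by simp
            then have ?conf by blast then show False using nc by blast
          qed
        qed
      next
        case False
        then have ii0: "i0 = i'" and jj1: "j1 = j \<or> j1 = j'" using a i0 unfolding D_def by auto
        show ?thesis
        proof
          assume eq: "w (i0,j1) = v i0 j2"
          from jj1 show False
          proof
            assume "j1 = j" then have "xh \<in> R i' \<and> xh \<noteq> v i' j' \<and> xh \<noteq> v i' j" using eq r2 wv ii0 by auto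
            then have ?conf by blast then show False using nc by blast
          next
            assume "j1 = j'" then have "xg \<in> R i' \<and> xg \<noteq> v i' j' \<and> xg \<noteq> v i' j" using eq r2 wv ii0 by auto
            then have ?conf by blast then show False using nc by blast
          qed
        qed
      qed
    qed
    show "\<And>i1 i2 j0. (i1,j0) \<in> D \<Longrightarrow> (i2,j0) \<notin> D \<Longrightarrow> i2 < n \<Longrightarrow> w (i1,j0) \<noteq> v i2 j0"
    proof -
      fix i1 i2 j0 assume a: "(i1,j0) \<in> D" "(i2,j0) \<notin> D" "i2 < n"
      have j0: "j0 = j \<or> j0 = j'" and i2: "i2 \<noteq> i" "i2 \<noteq> i'" using a unfolding D_def by auto
      have r1: "v i2 j \<in> C j" "v i2 j \<noteq> v i j" "v i2 j \<noteq> v i' j"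
        using CI[OF a(3) ij(3)] vcol[OF a(3) ij(1) ij(3) i2(1)] vcol[OF a(3) ij(2) ij(3) i2(2)] by auto
      have r2: "v i2 j' \<in> C j'" "v i2 j' \<noteq> v i j'" "v i2 j' \<noteq> v i' j'"
        using CI[OF a(3) ij(4)] vcol[OF a(3) ij(1) ij(4) i2(1)] vcol[OF a(3) ij(2) ij(4) i2(2)] by auto
      show "w (i1,j0) \<noteq> v i2 j0"
      proof (cases "j0 = j")
        case True
        then have ii1: "i1 = i \<or> i1 = i'" using a jj unfolding D_def by auto
        show ?thesis
        proof
          assume eq: "w (i1,j0) = v i2 j0"
          from ii1 show False
          proof
            assume "i1 = i" then have "xe \<in> C j \<and> xe \<noteq> v i j \<and> xe \<noteq> v i' j" using eq r1 wv True by simp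
            then have ?conf by blast then show False using nc by blast
          next
            assume "i1 = i'" then have "xh \<in> C j \<and> xh \<noteq> v i j \<and> xh \<noteq> v i' j" using eq r1 wv True by simp
            then have ?conf by blast then show False using nc by blast
          qed
        qed
      next
        case False
        then have jj0: "j0 = j'" and ii1: "i1 = i \<or> i1 = i'" using a j0 unfolding D_def by auto
        show ?thesis
        proof
          assume eq: "w (i1,j0) = v i2 j0"
          from ii1 show False
          proof
            assume "i1 = i" then have "xf \<in> C j' \<and> xf \<noteq> v i j' \<and> xf \<noteq> v i' j'" using eq r2 wv jj0 by auto
            then have ?conf by blast then show False using nc by blast
          next
            assume "i1 = i'" then have "xg \<in> C j' \<and> xg \<noteq> v i j' \<and> xg \<noteq> v i' j'" using eq r2 wv jj0 by auto
            then have ?conf by blast then show False using nc by blast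
          qed
        qed
      qed
    qed
  qed
  then show False using ch wv by simp
qed

lemma pK: "eok K A B a p \<Longrightarrow> A \<subseteq> K \<Longrightarrow> p \<in> K" unfolding eok_def by blast

lemma noC4:
  assumes e: "(i,j) \<in> U" and f: "(i,j') \<in> U" and g: "(i',j') \<in> U" and h: "(i',j) \<in> U"
  and ii: "i \<noteq> i'" and jj: "j \<noteq> j'"
  shows False
proof -
  have ij: "i < n" "i' < n" "j < n" "j' < n" using inU[OF e] inU[OF g] by auto
  obtain pe where pe: "eok K (R i) (C j) (v i j) pe" using partner[OF e] by blast
  obtain pf where pf: "eok K (R i) (C j') (v i j') pf" using partner[OF f] by blast
  obtain pg where pg: "eok K (R i') (C j') (v i' j') pg" using partner[OF g] by blast
  obtain ph where ph: "eok K (R i') (C j) (v i' j) ph" using partner[OF h] by blast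
  have d: "v i j \<noteq> v i j'" "v i j' \<noteq> v i' j'" "v i' j' \<noteq> v i' j" "v i' j \<noteq> v i j"
    using vrow[OF ij(1) ij(3) ij(4) jj] vcol[OF ij(1) ij(2) ij(4) ii] vrow[OF ij(2) ij(4) ij(3)] jj
      vcol[OF ij(2) ij(1) ij(3)] ii by auto
  have K: "v i j \<in> K" "v i j' \<in> K" "v i' j' \<in> K" "v i' j \<in> K" using vK ij by auto
  note rA = rect_alt[OF e f g h ii jj K(4) K(1) K(2) K(3) d(4) d(2) d(3)[symmetric] d(1) d(4)]
  note rB = rect_alt[OF e f g h ii jj K(2) K(3) K(4) K(1) d(2) d(4) d(1)[symmetric] d(3) d(1)[symmetric]]
  show False
    by (rule abs_C4[OF pe pf pg ph d Srow[OF e f jj] Scol[OF e h ii] rA rB K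
       pK[OF pe RK[OF ij(1)]] pK[OF pf RK[OF ij(1)]] pK[OF pg RK[OF ij(2)]] pK[OF ph RK[OF ij(2)]]])
qed

lemma vKb: "i < n \<Longrightarrow> j < n \<Longrightarrow> Suc 0 \<le> v i j" "i < n \<Longrightarrow> j < n \<Longrightarrow> v i j \<le> k"
  using vK by auto

lemma pKR: "eok K (R i) B a p \<Longrightarrow> i < n \<Longrightarrow> p \<in> K" using pK RK by blast

lemma cfg_P6:
  assumes u: "(r1,c1) \<in> U" "(r2,c1) \<in> U" "(r2,c2) \<in> U" "(r3,c2) \<in> U" "(r3,c3) \<in> U"
  and d: "r1 \<noteq> r2" "r1 \<noteq> r3" "r2 \<noteq> r3" "c1 \<noteq> c2" "c1 \<noteq> c3" "c2 \<noteq> c3"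
  shows False
proof -
  have b: "r1 < n" "r2 < n" "r3 < n" "c1 < n" "c2 < n" "c3 < n" using inU u by auto
  obtain p11 where e1: "eok K (R r1) (C c1) (v r1 c1) p11" using partner[OF u(1)] by blast
  obtain p21 where e2: "eok K (R r2) (C c1) (v r2 c1) p21" using partner[OF u(2)] by blast
  obtain p22 where e3: "eok K (R r2) (C c2) (v r2 c2) p22" using partner[OF u(3)] by blast
  obtain p32 where e4: "eok K (R r3) (C c2) (v r3 c2) p32" using partner[OF u(4)] by blast
  obtain p33 where e5: "eok K (R r3) (C c3) (v r3 c3) p33" using partner[OF u(5)] by blast
  show False
    apply (rule abs_P6[where ?x12.0="v r1 c2" and ?x13.0="v r1 c3" and ?x23.0="v r2 c3" and ?x31.0="v r3 c1", OF e1 e2 e3 e4 e5 Sp_col[OF u(1) u(2) d(1) e1 e2] Sp_row[OF u(2) u(3) d(4) e2 e3]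
       Sp_col[OF u(3) u(4) d(3) e3 e4] Sp_row[OF u(4) u(5) d(6) e4 e5]])
    using b d pKR[OF e1] pKR[OF e2] pKR[OF e3] pKR[OF e4] pKR[OF e5]
    by (simp_all add: RI CI vKb vrow vcol)
qed

lemma cfg_K14_row:
  assumes u: "(i,j1) \<in> U" "(i,j2) \<in> U" "(i,j3) \<in> U" "(i,j4) \<in> U"
  and d: "j1 \<noteq> j2" "j1 \<noteq> j3" "j1 \<noteq> j4" "j2 \<noteq> j3" "j2 \<noteq> j4" "j3 \<noteq> j4"
  shows False
proof -
  have b: "i < n" "j1 < n" "j2 < n" "j3 < n" "j4 < n" using inU u by auto
  obtain p1 where e1: "eok K (R i) (C j1) (v i j1) p1" using partner[OF u(1)] by blast
  obtain p2 where e2: "eok K (R i) (C j2) (v i j2) p2" using partner[OF u(2)] by blast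
  obtain p3 where e3: "eok K (R i) (C j3) (v i j3) p3" using partner[OF u(3)] by blast
  obtain p4 where e4: "eok K (R i) (C j4) (v i j4) p4" using partner[OF u(4)] by blast
  show False
    apply (rule abs_K14[OF e1 e2 e3 e4 Sp_row[OF u(1) u(2) d(1) e1 e2] Sp_row[OF u(1) u(3) d(2) e1 e3]
      Sp_row[OF u(1) u(4) d(3) e1 e4] Sp_row[OF u(2) u(3) d(4) e2 e3] Sp_row[OF u(2) u(4) d(5) e2 e4]
      Sp_row[OF u(3) u(4) d(6) e3 e4]])
    using b d pKR[OF e1] pKR[OF e2] pKR[OF e3] pKR[OF e4]
    by (simp_all add: RI CI vKb vrow vcol)
qed

lemma cfg_K14_col:
  assumes u: "(i1,j) \<in> U" "(i2,j) \<in> U" "(i3,j) \<in> U" "(i4,j) \<in> U"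
  and d: "i1 \<noteq> i2" "i1 \<noteq> i3" "i1 \<noteq> i4" "i2 \<noteq> i3" "i2 \<noteq> i4" "i3 \<noteq> i4"
  shows False
proof -
  have b: "j < n" "i1 < n" "i2 < n" "i3 < n" "i4 < n" using inU u by auto
  obtain p1 where e1: "eok K (R i1) (C j) (v i1 j) p1" using partner[OF u(1)] by blast
  obtain p2 where e2: "eok K (R i2) (C j) (v i2 j) p2" using partner[OF u(2)] by blast
  obtain p3 where e3: "eok K (R i3) (C j) (v i3 j) p3" using partner[OF u(3)] by blast
  obtain p4 where e4: "eok K (R i4) (C j) (v i4 j) p4" using partner[OF u(4)] by blast
  show False
    apply (rule abs_K14[OF eok_sym[OF e1] eok_sym[OF e2] eok_sym[OF e3] eok_sym[OF e4]
      Sp_col[OF u(1) u(2) d(1) e1 e2] Sp_col[OF u(1) u(3) d(2) e1 e3]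
      Sp_col[OF u(1) u(4) d(3) e1 e4] Sp_col[OF u(2) u(3) d(4) e2 e3] Sp_col[OF u(2) u(4) d(5) e2 e4]
      Sp_col[OF u(3) u(4) d(6) e3 e4]])
    using b d pKR[OF e1] pKR[OF e2] pKR[OF e3] pKR[OF e4]
    by (simp_all add: RI CI vKb vrow vcol)
qed

lemma cfg_S311_row:
  assumes u: "(i,j1) \<in> U" "(i,j2) \<in> U" "(i,j3) \<in> U" "(z,j1) \<in> U" "(z,t) \<in> U"
  and d: "j1 \<noteq> j2" "j1 \<noteq> j3" "j2 \<noteq> j3" "t \<noteq> j1" "t \<noteq> j2" "t \<noteq> j3" "z \<noteq> i"
  shows False
proof -
  have b: "i < n" "j1 < n" "j2 < n" "j3 < n" "z < n" "t < n" using inU u by auto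
  obtain p1 where e1: "eok K (R i) (C j1) (v i j1) p1" using partner[OF u(1)] by blast
  obtain p2 where e2: "eok K (R i) (C j2) (v i j2) p2" using partner[OF u(2)] by blast
  obtain p3 where e3: "eok K (R i) (C j3) (v i j3) p3" using partner[OF u(3)] by blast
  obtain q1 where e4: "eok K (R z) (C j1) (v z j1) q1" using partner[OF u(4)] by blast
  obtain qt where e5: "eok K (R z) (C t) (v z t) qt" using partner[OF u(5)] by blast
  show False
    apply (rule abs_S311[where xt="v i t" and ?z2.0="v z j2" and ?z3.0="v z j3",
      OF e1 e2 e3 e4 e5 Sp_row[OF u(1) u(2) d(1) e1 e2] Sp_row[OF u(1) u(3) d(2) e1 e3]
      Sp_row[OF u(2) u(3) d(3) e2 e3] Sp_col[OF u(1) u(4) d(7)[symmetric] e1 e4]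
      Sp_row[OF u(4) u(5) d(4)[symmetric] e4 e5]])
    using b d pKR[OF e1] pKR[OF e2] pKR[OF e3] pKR[OF e4] pKR[OF e5]
    by (simp_all add: RI CI vKb vrow vcol)
qed

lemma cfg_S311_col:
  assumes u: "(i1,j) \<in> U" "(i2,j) \<in> U" "(i3,j) \<in> U" "(i1,z) \<in> U" "(t,z) \<in> U"
  and d: "i1 \<noteq> i2" "i1 \<noteq> i3" "i2 \<noteq> i3" "t \<noteq> i1" "t \<noteq> i2" "t \<noteq> i3" "z \<noteq> j"
  shows False
proof -
  have b: "j < n" "i1 < n" "i2 < n" "i3 < n" "z < n" "t < n" using inU u by auto
  obtain p1 where e1: "eok K (R i1) (C j) (v i1 j) p1" using partner[OF u(1)] by blast
  obtain p2 where e2: "eok K (R i2) (C j) (v i2 j) p2" using partner[OF u(2)] by blast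
  obtain p3 where e3: "eok K (R i3) (C j) (v i3 j) p3" using partner[OF u(3)] by blast
  obtain q1 where e4: "eok K (R i1) (C z) (v i1 z) q1" using partner[OF u(4)] by blast
  obtain qt where e5: "eok K (R t) (C z) (v t z) qt" using partner[OF u(5)] by blast
  show False
    apply (rule abs_S311[where xt="v t j" and ?z2.0="v i2 z" and ?z3.0="v i3 z",
      OF eok_sym[OF e1] eok_sym[OF e2] eok_sym[OF e3] eok_sym[OF e4] eok_sym[OF e5]
      Sp_col[OF u(1) u(2) d(1) e1 e2] Sp_col[OF u(1) u(3) d(2) e1 e3]
      Sp_col[OF u(2) u(3) d(3) e2 e3] Sp_row[OF u(1) u(4) d(7)[symmetric] e1 e4]
      Sp_col[OF u(4) u(5) d(4)[symmetric] e4 e5]])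
    using b d pKR[OF e1] pKR[OF e2] pKR[OF e3] pKR[OF e4] pKR[OF e5]
    by (simp_all add: RI CI vKb vrow vcol)
qed

lemma cfg_S221_row:
  assumes u: "(i,j1) \<in> U" "(i,j2) \<in> U" "(i,j3) \<in> U" "(z1,j1) \<in> U" "(z2,j2) \<in> U"
  and d: "j1 \<noteq> j2" "j1 \<noteq> j3" "j2 \<noteq> j3" "z1 \<noteq> i" "z2 \<noteq> i" "z1 \<noteq> z2"
  shows False
proof -
  have b: "i < n" "j1 < n" "j2 < n" "j3 < n" "z1 < n" "z2 < n" using inU u by auto
  obtain p1 where e1: "eok K (R i) (C j1) (v i j1) p1" using partner[OF u(1)] by blast
  obtain p2 where e2: "eok K (R i) (C j2) (v i j2) p2" using partner[OF u(2)] by blast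
  obtain p3 where e3: "eok K (R i) (C j3) (v i j3) p3" using partner[OF u(3)] by blast
  obtain q1 where e4: "eok K (R z1) (C j1) (v z1 j1) q1" using partner[OF u(4)] by blast
  obtain q2 where e5: "eok K (R z2) (C j2) (v z2 j2) q2" using partner[OF u(5)] by blast
  show False
    apply (rule abs_S221[where ?u12.0="v z1 j2" and ?u13.0="v z1 j3" and ?u21.0="v z2 j1" and ?u23.0="v z2 j3",
      OF e1 e2 e3 e4 e5 Sp_row[OF u(1) u(2) d(1) e1 e2] Sp_row[OF u(1) u(3) d(2) e1 e3]
      Sp_row[OF u(2) u(3) d(3) e2 e3] Sp_col[OF u(1) u(4) d(4)[symmetric] e1 e4]
      Sp_col[OF u(2) u(5) d(5)[symmetric] e2 e5]])
    using b d pKR[OF e1] pKR[OF e2] pKR[OF e3] pKR[OF e4] pKR[OF e5]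
    by (simp_all add: RI CI vKb vrow vcol)
qed

lemma cfg_S221_col:
  assumes u: "(i1,j) \<in> U" "(i2,j) \<in> U" "(i3,j) \<in> U" "(i1,z1) \<in> U" "(i2,z2) \<in> U"
  and d: "i1 \<noteq> i2" "i1 \<noteq> i3" "i2 \<noteq> i3" "z1 \<noteq> j" "z2 \<noteq> j" "z1 \<noteq> z2"
  shows False
proof -
  have b: "j < n" "i1 < n" "i2 < n" "i3 < n" "z1 < n" "z2 < n" using inU u by auto
  obtain p1 where e1: "eok K (R i1) (C j) (v i1 j) p1" using partner[OF u(1)] by blast
  obtain p2 where e2: "eok K (R i2) (C j) (v i2 j) p2" using partner[OF u(2)] by blast
  obtain p3 where e3: "eok K (R i3) (C j) (v i3 j) p3" using partner[OF u(3)] by blast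
  obtain q1 where e4: "eok K (R i1) (C z1) (v i1 z1) q1" using partner[OF u(4)] by blast
  obtain q2 where e5: "eok K (R i2) (C z2) (v i2 z2) q2" using partner[OF u(5)] by blast
  show False
    apply (rule abs_S221[where ?u12.0="v i2 z1" and ?u13.0="v i3 z1" and ?u21.0="v i1 z2" and ?u23.0="v i3 z2",
      OF eok_sym[OF e1] eok_sym[OF e2] eok_sym[OF e3] eok_sym[OF e4] eok_sym[OF e5]
      Sp_col[OF u(1) u(2) d(1) e1 e2] Sp_col[OF u(1) u(3) d(2) e1 e3]
      Sp_col[OF u(2) u(3) d(3) e2 e3] Sp_row[OF u(1) u(4) d(4)[symmetric] e1 e4]
      Sp_row[OF u(2) u(5) d(5)[symmetric] e2 e5]])
    using b d pKR[OF e1] pKR[OF e2] pKR[OF e3] pKR[OF e4] pKR[OF e5]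
    by (simp_all add: RI CI vKb vrow vcol)
qed

lemma cfg_DS:
  assumes u: "(i,j) \<in> U" "(i,j1) \<in> U" "(i,j2) \<in> U" "(i1,j) \<in> U" "(i2,j) \<in> U"
  and d: "j \<noteq> j1" "j \<noteq> j2" "j1 \<noteq> j2" "i \<noteq> i1" "i \<noteq> i2" "i1 \<noteq> i2"
  shows False
proof -
  have b: "i < n" "j < n" "j1 < n" "j2 < n" "i1 < n" "i2 < n" using inU u by auto
  obtain p0 where e1: "eok K (R i) (C j) (v i j) p0" using partner[OF u(1)] by blast
  obtain p1 where e2: "eok K (R i) (C j1) (v i j1) p1" using partner[OF u(2)] by blast
  obtain p2 where e3: "eok K (R i) (C j2) (v i j2) p2" using partner[OF u(3)] by blast
  obtain q1 where e4: "eok K (R i1) (C j) (v i1 j) q1" using partner[OF u(4)] by blast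
  obtain q2 where e5: "eok K (R i2) (C j) (v i2 j) q2" using partner[OF u(5)] by blast
  show False
    apply (rule abs_DS[where ?u11.0="v i1 j1" and ?u12.0="v i1 j2" and ?u21.0="v i2 j1" and ?u22.0="v i2 j2",
      OF e1 e2 e3 e4 e5 Sp_row[OF u(1) u(2) d(1) e1 e2] Sp_row[OF u(1) u(3) d(2) e1 e3]
      Sp_row[OF u(2) u(3) d(3) e2 e3] Sp_col[OF u(1) u(4) d(4) e1 e4]
      Sp_col[OF u(1) u(5) d(5) e1 e5] Sp_col[OF u(4) u(5) d(6) e4 e5]])
    using b d pKR[OF e1] pKR[OF e2] pKR[OF e3] pKR[OF e4] pKR[OF e5]
    by (simp_all add: RI CI vKb vrow vcol)
qed

definition Nr :: "nat \<Rightarrow> nat set" where "Nr i = {j\<in>{..<n}. (i,j) \<in> U}"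
definition Nc :: "nat \<Rightarrow> nat set" where "Nc j = {i\<in>{..<n}. (i,j) \<in> U}"
definition dr :: "nat \<Rightarrow> nat" where "dr i = card (Nr i)"
definition dc :: "nat \<Rightarrow> nat" where "dc j = card (Nc j)"

lemma Nr_iff: "j \<in> Nr i \<longleftrightarrow> (i,j) \<in> U" unfolding Nr_def using inU by auto
lemma Nc_iff: "i \<in> Nc j \<longleftrightarrow> (i,j) \<in> U" unfolding Nc_def using inU by auto
lemma finNr: "finite (Nr i)" unfolding Nr_def by auto
lemma finNc: "finite (Nc j)" unfolding Nc_def by auto

lemma four_elems:
  assumes "finite S" "4 \<le> card S"
  shows "\<exists>a b c d. a \<in> S \<and> b \<in> S \<and> c \<in> S \<and> d \<in> S \<and> a \<noteq> b \<and> a \<noteq> c \<and> a \<noteq> d \<and> b \<noteq> c \<and> b \<noteq> d \<and> c \<noteq> d"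
proof -
  obtain T where T: "T \<subseteq> S" "card T = 4" using obtain_subset_with_card_n[OF assms(2)] by blast
  then have "card T = Suc (Suc (Suc (Suc 0)))" by simp
  then obtain a b c d where "T = {a,b,c,d}" "a \<noteq> b" "a \<noteq> c" "a \<noteq> d" "b \<noteq> c" "b \<noteq> d" "c \<noteq> d"
    by (auto simp: card_Suc_eq)
  then show ?thesis using T by blast
qed

lemma dr_le3: "dr i \<le> 3"
proof (rule ccontr)
  assume "\<not> dr i \<le> 3"
  then have "4 \<le> card (Nr i)" unfolding dr_def by simp
  then obtain a b c d where "a \<in> Nr i" "b \<in> Nr i" "c \<in> Nr i" "d \<in> Nr i" "a \<noteq> b" "a \<noteq> c" "a \<noteq> d" "b \<noteq> c" "b \<noteq> d" "c \<noteq> d"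
    using four_elems[OF finNr] by blast
  then show False using cfg_K14_row[of i a b c d] by (simp add: Nr_iff)
qed

lemma dc_le3: "dc j \<le> 3"
proof (rule ccontr)
  assume "\<not> dc j \<le> 3"
  then have "4 \<le> card (Nc j)" unfolding dc_def by simp
  then obtain a b c d where "a \<in> Nc j" "b \<in> Nc j" "c \<in> Nc j" "d \<in> Nc j" "a \<noteq> b" "a \<noteq> c" "a \<noteq> d" "b \<noteq> c" "b \<noteq> d" "c \<noteq> d"
    using four_elems[OF finNc] by blast
  then show False using cfg_K14_col[of a j b c d] by (simp add: Nc_iff)
qed

lemma dr_ge1: "(i,j) \<in> U \<Longrightarrow> 1 \<le> dr i"
  unfolding dr_def using finNr Nr_iff by (metis One_nat_def Suc_leI card_gt_0_iff empty_iff)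
lemma dc_ge1: "(i,j) \<in> U \<Longrightarrow> 1 \<le> dc j"
  unfolding dc_def using finNc Nc_iff by (metis One_nat_def Suc_leI card_gt_0_iff empty_iff)

lemma other_row: assumes "(i,j) \<in> U" "2 \<le> dr i" shows "\<exists>j'. j' \<noteq> j \<and> (i,j') \<in> U"
proof (rule ccontr)
  assume "\<not> ?thesis"
  then have "Nr i \<subseteq> {j}" using Nr_iff by auto
  then have "card (Nr i) \<le> 1" using card_mono[of "{j}"] by fastforce
  then show False using assms(2) unfolding dr_def by simp
qed

lemma other_col: assumes "(i,j) \<in> U" "2 \<le> dc j" shows "\<exists>i'. i' \<noteq> i \<and> (i',j) \<in> U"
proof (rule ccontr)
  assume "\<not> ?thesis"
  then have "Nc j \<subseteq> {i}" using Nc_iff by auto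
  then have "card (Nc j) \<le> 1" using card_mono[of "{i}"] by fastforce
  then show False using assms(2) unfolding dc_def by simp
qed

lemma two_row: assumes "(i,j) \<in> U" "dr i = 2"
  shows "\<exists>j'. j' \<noteq> j \<and> (i,j') \<in> U \<and> (\<forall>j''. (i,j'') \<in> U \<longrightarrow> j'' = j \<or> j'' = j')"
proof -
  obtain x y where xy: "Nr i = {x,y}" "x \<noteq> y" using assms(2) unfolding dr_def by (meson card_2_iff)
  have "j \<in> Nr i" using assms(1) Nr_iff by simp
  then show ?thesis using xy Nr_iff by (metis insert_iff singletonD)
qed

lemma two_col: assumes "(i,j) \<in> U" "dc j = 2"
  shows "\<exists>i'. i' \<noteq> i \<and> (i',j) \<in> U \<and> (\<forall>i''. (i'',j) \<in> U \<longrightarrow> i'' = i \<or> i'' = i')"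
proof -
  obtain x y where xy: "Nc j = {x,y}" "x \<noteq> y" using assms(2) unfolding dc_def by (meson card_2_iff)
  have "i \<in> Nc j" using assms(1) Nc_iff by simp
  then show ?thesis using xy Nc_iff by (metis insert_iff singletonD)
qed

lemma three_row: assumes "(i,j) \<in> U" "dr i = 3"
  shows "\<exists>j1 j2. j1 \<noteq> j \<and> j2 \<noteq> j \<and> j1 \<noteq> j2 \<and> (i,j1) \<in> U \<and> (i,j2) \<in> U \<and> (\<forall>j''. (i,j'') \<in> U \<longrightarrow> j'' = j \<or> j'' = j1 \<or> j'' = j2)"
proof -
  obtain x y z where xy: "Nr i = {x,y,z}" "x \<noteq> y" "y \<noteq> z" "x \<noteq> z" using assms(2) unfolding dr_def by (meson card_3_iff)
  have "j \<in> Nr i" using assms(1) Nr_iff by simp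
  then have "j = x \<or> j = y \<or> j = z" using xy by auto
  moreover have m: "(i,x) \<in> U" "(i,y) \<in> U" "(i,z) \<in> U" using xy Nr_iff by auto
  moreover have "\<forall>q. (i,q) \<in> U \<longrightarrow> q = x \<or> q = y \<or> q = z" using xy Nr_iff by auto
  ultimately show ?thesis using xy
    apply (elim disjE)
      apply (rule exI[of _ y], rule exI[of _ z]) apply blast
     apply (rule exI[of _ x], rule exI[of _ z]) apply blast
    apply (rule exI[of _ x], rule exI[of _ y]) apply blast
    done
qed

lemma three_col: assumes "(i,j) \<in> U" "dc j = 3"
  shows "\<exists>i1 i2. i1 \<noteq> i \<and> i2 \<noteq> i \<and> i1 \<noteq> i2 \<and> (i1,j) \<in> U \<and> (i2,j) \<in> U \<and> (\<forall>i''. (i'',j) \<in> U \<longrightarrow> i'' = i \<or> i'' = i1 \<or> i'' = i2)"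
proof -
  obtain x y z where xy: "Nc j = {x,y,z}" "x \<noteq> y" "y \<noteq> z" "x \<noteq> z" using assms(2) unfolding dc_def by (meson card_3_iff)
  have "i \<in> Nc j" using assms(1) Nc_iff by simp
  then have "i = x \<or> i = y \<or> i = z" using xy by auto
  moreover have m: "(x,j) \<in> U" "(y,j) \<in> U" "(z,j) \<in> U" using xy Nc_iff by auto
  moreover have "\<forall>q. (q,j) \<in> U \<longrightarrow> q = x \<or> q = y \<or> q = z" using xy Nc_iff by auto
  ultimately show ?thesis using xy
    apply (elim disjE)
      apply (rule exI[of _ y], rule exI[of _ z]) apply blast
     apply (rule exI[of _ x], rule exI[of _ z]) apply blast
    apply (rule exI[of _ x], rule exI[of _ y]) apply blast
    done
qed

definition sr :: "nat \<Rightarrow> nat \<Rightarrow> nat" where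
  "sr i j = (if dr i = 1 then 4 else if dr i = 2 then (if dc j = 1 then 1 else if (\<exists>j'. (i,j') \<in> U \<and> dc j' = 1) then 3 else 2)
             else (if dc j = 1 then 1 else 2))"
definition sc :: "nat \<Rightarrow> nat \<Rightarrow> nat" where
  "sc i j = (if dc j = 1 then 4 else if dc j = 2 then (if dr i = 1 then 1 else if (\<exists>i'. (i',j) \<in> U \<and> dr i' = 1) then 3 else 2)
             else (if dr i = 1 then 1 else 2))"

lemma edge5:
  assumes e: "(i,j) \<in> U"
  shows "5 \<le> sr i j + sc i j"
proof -
  have dri: "dr i = 1 \<or> dr i = 2 \<or> dr i = 3" using dr_ge1[OF e] dr_le3[of i] by auto
  have dcj: "dc j = 1 \<or> dc j = 2 \<or> dc j = 3" using dc_ge1[OF e] dc_le3[of j] by auto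
  have sc1: "1 \<le> sc i j" unfolding sc_def by auto
  have sr1: "1 \<le> sr i j" unfolding sr_def by auto
  show ?thesis
  proof (cases "dr i = 1")
    case True then show ?thesis using sc1 unfolding sr_def by simp
  next
    case ndr1: False
    show ?thesis
    proof (cases "dc j = 1")
      case True then show ?thesis using sr1 unfolding sc_def by simp
    next
      case ndc1: False
      have c22: "(\<exists>j'. (i,j') \<in> U \<and> dc j' = 1) \<or> (\<exists>i'. (i',j) \<in> U \<and> dr i' = 1)"
        if d2: "dr i = 2" "dc j = 2"
      proof (rule ccontr)
        assume neg: "\<not> ?thesis"
        obtain j' where j': "j' \<noteq> j" "(i,j') \<in> U" using two_row[OF e d2(1)] by blast
        have "2 \<le> dc j'" using dc_ge1[OF j'(2)] neg j' by fastforce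
        then obtain i2 where i2: "i2 \<noteq> i" "(i2,j') \<in> U" using other_col[OF j'(2)] by blast
        obtain i' where i': "i' \<noteq> i" "(i',j) \<in> U" using two_col[OF e d2(2)] by blast
        have "2 \<le> dr i'" using dr_ge1[OF i'(2)] neg i' by fastforce
        then obtain j2 where j2: "j2 \<noteq> j" "(i',j2) \<in> U" using other_row[OF i'(2)] by blast
        have "i2 \<noteq> i'" using noC4[OF e j'(2) _ i'(2) i'(1)[symmetric] j'(1)[symmetric]] i2 by blast
        moreover have "j' \<noteq> j2" using noC4[OF e j'(2) _ i'(2) i'(1)[symmetric] j'(1)[symmetric]] j2 by blast
        ultimately show False using cfg_P6[OF i2(2) j'(2) e i'(2) j2(2)] i2 i' j' j2 by auto
      qed
      have c23: "\<exists>j'. (i,j') \<in> U \<and> dc j' = 1" if d2: "dr i = 2" "dc j = 3"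
      proof (rule ccontr)
        assume neg: "\<not> ?thesis"
        obtain j' where j': "j' \<noteq> j" "(i,j') \<in> U" using two_row[OF e d2(1)] by blast
        have "2 \<le> dc j'" using dc_ge1[OF j'(2)] neg j' by fastforce
        then obtain i2 where i2: "i2 \<noteq> i" "(i2,j') \<in> U" using other_col[OF j'(2)] by blast
        obtain i1 i3 where i13: "i1 \<noteq> i" "i3 \<noteq> i" "i1 \<noteq> i3" "(i1,j) \<in> U" "(i3,j) \<in> U"
          using three_col[OF e d2(2)] by blast
        have "i2 \<noteq> i1" using noC4[OF e j'(2) _ i13(4) i13(1)[symmetric] j'(1)[symmetric]] i2 by blast
        moreover have "i2 \<noteq> i3" using noC4[OF e j'(2) _ i13(5) i13(2)[symmetric] j'(1)[symmetric]] i2 by blast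
        ultimately show False using cfg_S311_col[OF e i13(4) i13(5) j'(2) i2(2)] i13 i2 j' by auto
      qed
      have c32: "\<exists>i'. (i',j) \<in> U \<and> dr i' = 1" if d2: "dr i = 3" "dc j = 2"
      proof (rule ccontr)
        assume neg: "\<not> ?thesis"
        obtain i' where i': "i' \<noteq> i" "(i',j) \<in> U" using two_col[OF e d2(2)] by blast
        have "2 \<le> dr i'" using dr_ge1[OF i'(2)] neg i' by fastforce
        then obtain j2 where j2: "j2 \<noteq> j" "(i',j2) \<in> U" using other_row[OF i'(2)] by blast
        obtain j1 j3 where j13: "j1 \<noteq> j" "j3 \<noteq> j" "j1 \<noteq> j3" "(i,j1) \<in> U" "(i,j3) \<in> U"
          using three_row[OF e d2(1)] by blast
        have "j2 \<noteq> j1" using noC4[OF e j13(4) _ i'(2) i'(1)[symmetric] j13(1)[symmetric]] j2 by blast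
        moreover have "j2 \<noteq> j3" using noC4[OF e j13(5) _ i'(2) i'(1)[symmetric] j13(2)[symmetric]] j2 by blast
        ultimately show False using cfg_S311_row[OF e j13(4) j13(5) i'(2) j2(2)] j13 i' j2 by auto
      qed
      have c33: False if d3: "dr i = 3" "dc j = 3"
      proof -
        obtain j1 j3 where j13: "j1 \<noteq> j" "j3 \<noteq> j" "j1 \<noteq> j3" "(i,j1) \<in> U" "(i,j3) \<in> U"
          using three_row[OF e d3(1)] by blast
        obtain i1 i3 where i13: "i1 \<noteq> i" "i3 \<noteq> i" "i1 \<noteq> i3" "(i1,j) \<in> U" "(i3,j) \<in> U"
          using three_col[OF e d3(2)] by blast
        show False using cfg_DS[OF e j13(4) j13(5) i13(4) i13(5)] j13 i13 by auto
      qed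
      have "(dr i = 2 \<and> dc j = 2) \<or> (dr i = 2 \<and> dc j = 3) \<or> (dr i = 3 \<and> dc j = 2) \<or> (dr i = 3 \<and> dc j = 3)"
        using dri dcj ndr1 ndc1 by auto
      then show ?thesis
      proof (elim disjE conjE)
        assume a: "dr i = 2" "dc j = 2"
        then show ?thesis using c22[OF a] unfolding sr_def sc_def by auto
      next
        assume a: "dr i = 2" "dc j = 3"
        then show ?thesis using c23[OF a] unfolding sr_def sc_def by auto
      next
        assume a: "dr i = 3" "dc j = 2"
        then show ?thesis using c32[OF a] unfolding sr_def sc_def by auto
      next
        assume a: "dr i = 3" "dc j = 3"
        then show ?thesis using c33[OF a] by simp
      qed
    qed
  qed
qed

lemma rowsum: "(\<Sum>j\<in>Nr i. sr i j) \<le> 4"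
proof -
  have dri: "dr i = 0 \<or> dr i = 1 \<or> dr i = 2 \<or> dr i = 3" using dr_le3[of i] by auto
  have dc1: "j \<in> Nr i \<Longrightarrow> 1 \<le> dc j" for j using dc_ge1 Nr_iff by blast
  show ?thesis
  proof (cases "dr i = 0")
    case True then have "Nr i = {}" using finNr unfolding dr_def by simp
    then show ?thesis by simp
  next
    case n0: False
    show ?thesis
    proof (cases "dr i = 1")
      case True
      then obtain x where "Nr i = {x}" unfolding dr_def by (meson card_1_singletonE)
      then show ?thesis using True unfolding sr_def by simp
    next
      case n1: False
      show ?thesis
      proof (cases "dr i = 2")
        case True
        then obtain x y where xy: "Nr i = {x,y}" "x \<noteq> y" unfolding dr_def by (meson card_2_iff)
        have mx: "(i,x) \<in> U" "(i,y) \<in> U" using xy Nr_iff by auto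
        have "sr i x + sr i y \<le> 4"
        proof (cases "dc x = 1"; cases "dc y = 1")
          assume "dc x = 1" "dc y = 1" then show ?thesis using True unfolding sr_def by simp
        next
          assume "dc x = 1" "dc y \<noteq> 1" then show ?thesis using True unfolding sr_def by simp
        next
          assume "dc x \<noteq> 1" "dc y = 1" then show ?thesis using True unfolding sr_def by simp
        next
          assume a: "dc x \<noteq> 1" "dc y \<noteq> 1"
          have "\<not> (\<exists>j'. (i,j') \<in> U \<and> dc j' = 1)" by (metis Nr_iff a(1) a(2) empty_iff insert_iff xy(1))
          then show ?thesis using True a unfolding sr_def by simp
        qed
        then show ?thesis using xy by simp
      next
        case n2: False
        then have d3: "dr i = 3" using dri n0 n1 by simp
        then obtain x y z where xy: "Nr i = {x,y,z}" "x \<noteq> y" "y \<noteq> z" "x \<noteq> z" unfolding dr_def by (meson card_3_iff)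
        have m: "(i,x) \<in> U" "(i,y) \<in> U" "(i,z) \<in> U" using xy Nr_iff by auto
        have two: False if h: "(i,a) \<in> U" "(i,b) \<in> U" "(i,c) \<in> U" "a \<noteq> b" "a \<noteq> c" "b \<noteq> c"
          "dc a \<noteq> 1" "dc b \<noteq> 1" for a b c
        proof -
          have "2 \<le> dc a" "2 \<le> dc b" using h dc_ge1 by fastforce+
          obtain za where za: "za \<noteq> i" "(za,a) \<in> U" using other_col[OF h(1) \<open>2 \<le> dc a\<close>] by blast
          obtain zb where zb: "zb \<noteq> i" "(zb,b) \<in> U" using other_col[OF h(2) \<open>2 \<le> dc b\<close>] by blast
          have "za \<noteq> zb" using noC4[OF h(1) h(2) _ za(2) za(1)[symmetric] h(4)] zb by blast
          then show False using cfg_S221_row[OF h(1) h(2) h(3) za(2) zb(2)] h za zb by auto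
        qed
        have le: "sr i q \<le> 2" for q using d3 unfolding sr_def by simp
        have l1: "dc q = 1 \<Longrightarrow> sr i q = 1" for q using d3 unfolding sr_def by simp
        have "sr i x + sr i y + sr i z \<le> 4"
        proof (cases "dc x = 1")
          case True
          then show ?thesis
          proof (cases "dc y = 1")
            case True then show ?thesis using l1[of x] l1[of y] l1[of z] le[of x] le[of y] le[of z] \<open>dc x = 1\<close> by linarith
          next
            case False then have "dc z = 1" using two[of y z x] m xy by blast
            then show ?thesis using l1[of x] l1[of y] l1[of z] le[of x] le[of y] le[of z] \<open>dc x = 1\<close> by linarith
          qed
        next
          case False
          then have "dc y = 1" "dc z = 1" using two[of x y z] two[of x z y] m xy by blast+
          then show ?thesis using l1[of x] l1[of y] l1[of z] le[of x] le[of y] le[of z] by linarith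
        qed
        then show ?thesis using xy by (simp add: add.assoc)
      qed
    qed
  qed
qed

lemma colsum: "(\<Sum>i\<in>Nc j. sc i j) \<le> 4"
proof -
  have dcj: "dc j = 0 \<or> dc j = 1 \<or> dc j = 2 \<or> dc j = 3" using dc_le3[of j] by auto
  show ?thesis
  proof (cases "dc j = 0")
    case True then have "Nc j = {}" using finNc unfolding dc_def by simp
    then show ?thesis by simp
  next
    case n0: False
    show ?thesis
    proof (cases "dc j = 1")
      case True
      then obtain x where "Nc j = {x}" unfolding dc_def by (meson card_1_singletonE)
      then show ?thesis using True unfolding sc_def by simp
    next
      case n1: False
      show ?thesis
      proof (cases "dc j = 2")
        case True
        then obtain x y where xy: "Nc j = {x,y}" "x \<noteq> y" unfolding dc_def by (meson card_2_iff)
        have "sc x j + sc y j \<le> 4"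
        proof (cases "dr x = 1"; cases "dr y = 1")
          assume "dr x = 1" "dr y = 1" then show ?thesis using True unfolding sc_def by simp
        next
          assume "dr x = 1" "dr y \<noteq> 1" then show ?thesis using True unfolding sc_def by simp
        next
          assume "dr x \<noteq> 1" "dr y = 1" then show ?thesis using True unfolding sc_def by simp
        next
          assume a: "dr x \<noteq> 1" "dr y \<noteq> 1"
          have "\<not> (\<exists>i'. (i',j) \<in> U \<and> dr i' = 1)" by (metis Nc_iff a(1) a(2) empty_iff insert_iff xy(1))
          then show ?thesis using True a unfolding sc_def by simp
        qed
        then show ?thesis using xy by simp
      next
        case n2: False
        then have d3: "dc j = 3" using dcj n0 n1 by simp
        then obtain x y z where xy: "Nc j = {x,y,z}" "x \<noteq> y" "y \<noteq> z" "x \<noteq> z" unfolding dc_def by (meson card_3_iff)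
        have m: "(x,j) \<in> U" "(y,j) \<in> U" "(z,j) \<in> U" using xy Nc_iff by auto
        have two: False if h: "(a,j) \<in> U" "(b,j) \<in> U" "(c,j) \<in> U" "a \<noteq> b" "a \<noteq> c" "b \<noteq> c"
          "dr a \<noteq> 1" "dr b \<noteq> 1" for a b c
        proof -
          have "2 \<le> dr a" "2 \<le> dr b" using h dr_ge1 by fastforce+
          obtain za where za: "za \<noteq> j" "(a,za) \<in> U" using other_row[OF h(1) \<open>2 \<le> dr a\<close>] by blast
          obtain zb where zb: "zb \<noteq> j" "(b,zb) \<in> U" using other_row[OF h(2) \<open>2 \<le> dr b\<close>] by blast
          have "za \<noteq> zb" using noC4[OF h(1) za(2) _ h(2) h(4) za(1)[symmetric]] zb by blast
          then show False using cfg_S221_col[OF h(1) h(2) h(3) za(2) zb(2)] h za zb by auto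
        qed
        have le: "sc q j \<le> 2" for q using d3 unfolding sc_def by simp
        have l1: "dr q = 1 \<Longrightarrow> sc q j = 1" for q using d3 unfolding sc_def by simp
        have "sc x j + sc y j + sc z j \<le> 4"
        proof (cases "dr x = 1")
          case True
          then show ?thesis
          proof (cases "dr y = 1")
            case True then show ?thesis using l1[of x] l1[of y] l1[of z] le[of x] le[of y] le[of z] \<open>dr x = 1\<close> by linarith
          next
            case False then have "dr z = 1" using two[of y z x] m xy by blast
            then show ?thesis using l1[of x] l1[of y] l1[of z] le[of x] le[of y] le[of z] \<open>dr x = 1\<close> by linarith
          qed
        next
          case False
          then have "dr y = 1" "dr z = 1" using two[of x y z] two[of x z y] m xy by blast+
          then show ?thesis using l1[of x] l1[of y] l1[of z] le[of x] le[of y] le[of z] by linarith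
        qed
        then show ?thesis using xy by (simp add: add.assoc)
      qed
    qed
  qed
qed

lemma U_Sigma: "U = Sigma {..<n} Nr"
  using inU Nr_iff by auto

lemma sum_rows: "(\<Sum>z\<in>U. g z) = (\<Sum>i<n. \<Sum>j\<in>Nr i. g (i,j))"
  by (subst U_Sigma) (simp add: sum.Sigma finNr)

lemma U_Sigma': "U = (\<lambda>(j,i). (i,j)) ` Sigma {..<n} Nc"
  using inU Nc_iff by (auto simp: image_iff)

lemma sum_cols: "(\<Sum>z\<in>U. g z) = (\<Sum>j<n. \<Sum>i\<in>Nc j. g (i,j))"
proof -
  have inj: "inj_on (\<lambda>(j,i). (i,j)) (Sigma {..<n} Nc)" by (auto intro: inj_onI)
  have "(\<Sum>z\<in>U. g z) = (\<Sum>z\<in>Sigma {..<n} Nc. g ((\<lambda>(j,i). (i,j)) z))"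
    by (subst U_Sigma') (simp add: sum.reindex[OF inj])
  also have "\<dots> = (\<Sum>j<n. \<Sum>i\<in>Nc j. g (i,j))" by (simp add: sum.Sigma finNc split_def)
  finally show ?thesis .
qed

lemma main_bound: "5 * card U \<le> 8 * n"
proof -
  have "5 * card U = (\<Sum>z\<in>U. (5::nat))" by simp
  also have "\<dots> \<le> (\<Sum>z\<in>U. sr (fst z) (snd z) + sc (fst z) (snd z))"
    by (rule sum_mono) (use edge5 in fastforce)
  also have "\<dots> = (\<Sum>z\<in>U. sr (fst z) (snd z)) + (\<Sum>z\<in>U. sc (fst z) (snd z))" by (simp add: sum.distrib)
  also have "(\<Sum>z\<in>U. sr (fst z) (snd z)) = (\<Sum>i<n. \<Sum>j\<in>Nr i. sr i j)" by (simp add: sum_rows)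
  also have "(\<Sum>z\<in>U. sc (fst z) (snd z)) = (\<Sum>j<n. \<Sum>i\<in>Nc j. sc i j)" by (simp add: sum_cols)
  also have "(\<Sum>i<n. \<Sum>j\<in>Nr i. sr i j) \<le> (\<Sum>i<n. (4::nat))" by (rule sum_mono) (rule rowsum)
  also have "(\<Sum>j<n. \<Sum>i\<in>Nc j. sc i j) \<le> (\<Sum>j<n. (4::nat))" by (rule sum_mono) (rule colsum)
  finally show ?thesis by simp
qed

end

definition c0 :: "nat \<Rightarrow> nat \<Rightarrow> nat" where
  "c0 a b = (if a = 0 then (if b = 0 then 1 else if b = 1 then 2 else if b = 2 then 3 else if b = 3 then 4 else 5) else if a = 1 then (if b = 0 then 2 else if b = 1 then 7 else if b = 2 then 4 else if b = 3 then 5 else 3) else if a = 2 then (if b = 0 then 7 else if b = 1 then 6 else if b = 2 then 5 else if b = 3 then 3 else 4) else if a = 3 then (if b = 0 then 8 else if b = 1 then 1 else if b = 2 then 6 else if b = 3 then 7 else 2) else (if b = 0 then 6 else if b = 1 then 8 else if b = 2 then 7 else if b = 3 then 2 else 1))"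

definition U0 :: "(nat \<times> nat) set" where
  "U0 = {(0,0), (1,0), (1,1), (2,1), (3,2), (3,3), (4,3), (4,4)}"

lemma base_unique:
  fixes w :: "nat \<Rightarrow> nat \<Rightarrow> nat"
  assumes P: "\<And>a b. a < 5 \<Longrightarrow> b < 5 \<Longrightarrow> (a,b) \<notin> U0 \<Longrightarrow> w a b = c0 a b"
  and rng: "\<And>a b. a < 5 \<Longrightarrow> b < 5 \<Longrightarrow> 1 \<le> w a b \<and> w a b \<le> 8"
  and rowd: "\<And>a b b'. a < 5 \<Longrightarrow> b < 5 \<Longrightarrow> b' < 5 \<Longrightarrow> b \<noteq> b' \<Longrightarrow> w a b \<noteq> w a b'"
  and cold: "\<And>a a' b. a < 5 \<Longrightarrow> a' < 5 \<Longrightarrow> b < 5 \<Longrightarrow> a \<noteq> a' \<Longrightarrow> w a b \<noteq> w a' b"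
  shows "\<And>a b. a < 5 \<Longrightarrow> b < 5 \<Longrightarrow> w a b = c0 a b"
proof -
  have p01: "w 0 1 = 2" using P[of 0 1] by (simp add: U0_def c0_def)
  have p02: "w 0 2 = 3" using P[of 0 2] by (simp add: U0_def c0_def)
  have p03: "w 0 3 = 4" using P[of 0 3] by (simp add: U0_def c0_def)
  have p04: "w 0 4 = 5" using P[of 0 4] by (simp add: U0_def c0_def)
  have p12: "w 1 2 = 4" using P[of 1 2] by (simp add: U0_def c0_def)
  have p13: "w 1 3 = 5" using P[of 1 3] by (simp add: U0_def c0_def)
  have p14: "w 1 4 = 3" using P[of 1 4] by (simp add: U0_def c0_def)
  have p20: "w 2 0 = 7" using P[of 2 0] by (simp add: U0_def c0_def)
  have p22: "w 2 2 = 5" using P[of 2 2] by (simp add: U0_def c0_def)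
  have p23: "w 2 3 = 3" using P[of 2 3] by (simp add: U0_def c0_def)
  have p24: "w 2 4 = 4" using P[of 2 4] by (simp add: U0_def c0_def)
  have p30: "w 3 0 = 8" using P[of 3 0] by (simp add: U0_def c0_def)
  have p31: "w 3 1 = 1" using P[of 3 1] by (simp add: U0_def c0_def)
  have p34: "w 3 4 = 2" using P[of 3 4] by (simp add: U0_def c0_def)
  have p40: "w 4 0 = 6" using P[of 4 0] by (simp add: U0_def c0_def)
  have p41: "w 4 1 = 8" using P[of 4 1] by (simp add: U0_def c0_def)
  have p42: "w 4 2 = 7" using P[of 4 2] by (simp add: U0_def c0_def)
  have p00: "w 0 0 = 1" using rng[of 0 0] rowd[of 0 0 1] rowd[of 0 0 2] rowd[of 0 0 3] rowd[of 0 0 4] cold[of 0 1 0] cold[of 0 2 0] cold[of 0 3 0] cold[of 0 4 0] p01 p02 p03 p04 p12 p13 p14 p20 p22 p23 p24 p30 p31 p34 p40 p41 p42 by simp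
  have p10: "w 1 0 = 2" using rng[of 1 0] rowd[of 1 0 1] rowd[of 1 0 2] rowd[of 1 0 3] rowd[of 1 0 4] cold[of 1 0 0] cold[of 1 2 0] cold[of 1 3 0] cold[of 1 4 0] p01 p02 p03 p04 p12 p13 p14 p20 p22 p23 p24 p30 p31 p34 p40 p41 p42 p00 by simp
  have p21: "w 2 1 = 6" using rng[of 2 1] rowd[of 2 1 0] rowd[of 2 1 2] rowd[of 2 1 3] rowd[of 2 1 4] cold[of 2 0 1] cold[of 2 1 1] cold[of 2 3 1] cold[of 2 4 1] p01 p02 p03 p04 p12 p13 p14 p20 p22 p23 p24 p30 p31 p34 p40 p41 p42 p00 p10 by simp
  have p11: "w 1 1 = 7" using rng[of 1 1] rowd[of 1 1 0] rowd[of 1 1 2] rowd[of 1 1 3] rowd[of 1 1 4] cold[of 1 0 1] cold[of 1 2 1] cold[of 1 3 1] cold[of 1 4 1] p01 p02 p03 p04 p12 p13 p14 p20 p22 p23 p24 p30 p31 p34 p40 p41 p42 p00 p10 p21 by simp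
  have p44: "w 4 4 = 1" using rng[of 4 4] rowd[of 4 4 0] rowd[of 4 4 1] rowd[of 4 4 2] rowd[of 4 4 3] cold[of 4 0 4] cold[of 4 1 4] cold[of 4 2 4] cold[of 4 3 4] p01 p02 p03 p04 p12 p13 p14 p20 p22 p23 p24 p30 p31 p34 p40 p41 p42 p00 p10 p21 p11 by simp
  have p43: "w 4 3 = 2" using rng[of 4 3] rowd[of 4 3 0] rowd[of 4 3 1] rowd[of 4 3 2] rowd[of 4 3 4] cold[of 4 0 3] cold[of 4 1 3] cold[of 4 2 3] cold[of 4 3 3] p01 p02 p03 p04 p12 p13 p14 p20 p22 p23 p24 p30 p31 p34 p40 p41 p42 p00 p10 p21 p11 p44 by simp
  have p32: "w 3 2 = 6" using rng[of 3 2] rowd[of 3 2 0] rowd[of 3 2 1] rowd[of 3 2 3] rowd[of 3 2 4] cold[of 3 0 2] cold[of 3 1 2] cold[of 3 2 2] cold[of 3 4 2] p01 p02 p03 p04 p12 p13 p14 p20 p22 p23 p24 p30 p31 p34 p40 p41 p42 p00 p10 p21 p11 p44 p43 by simp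
  have p33: "w 3 3 = 7" using rng[of 3 3] rowd[of 3 3 0] rowd[of 3 3 1] rowd[of 3 3 2] rowd[of 3 3 4] cold[of 3 0 3] cold[of 3 1 3] cold[of 3 2 3] cold[of 3 4 3] p01 p02 p03 p04 p12 p13 p14 p20 p22 p23 p24 p30 p31 p34 p40 p41 p42 p00 p10 p21 p11 p44 p43 p32 by simp
  show "w a b = c0 a b" if "a < 5" "b < 5" for a b
  proof -
    have "a = 0 \<or> a = 1 \<or> a = 2 \<or> a = 3 \<or> a = 4" "b = 0 \<or> b = 1 \<or> b = 2 \<or> b = 3 \<or> b = 4" using that by auto
    then show ?thesis using p01 p02 p03 p04 p12 p13 p14 p20 p22 p23 p24 p30 p31 p34 p40 p41 p42 p00 p10 p21 p11 p44 p43 p32 p33 by (auto simp: c0_def)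
  qed
qed

lemma c0_range: "a < 5 \<Longrightarrow> b < 5 \<Longrightarrow> 1 \<le> c0 a b \<and> c0 a b \<le> 8"
  by (auto simp: c0_def)

lemma c0_5: "(a::nat) < 5 \<longleftrightarrow> a = 0 \<or> a = 1 \<or> a = 2 \<or> a = 3 \<or> a = 4" by auto
lemma c0_row: "a < 5 \<Longrightarrow> b < 5 \<Longrightarrow> b' < 5 \<Longrightarrow> b \<noteq> b' \<Longrightarrow> c0 a b \<noteq> c0 a b'"
  unfolding c0_5 by (auto simp: c0_def)
lemma c0_col: "a < 5 \<Longrightarrow> a' < 5 \<Longrightarrow> b < 5 \<Longrightarrow> a \<noteq> a' \<Longrightarrow> c0 a b \<noteq> c0 a' b"
  unfolding c0_5 by (auto simp: c0_def)
lemma U0_sub: "(a,b) \<in> U0 \<Longrightarrow> a < 5 \<and> b < 5" by (auto simp: U0_def)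
lemma card_U0: "card U0 = 8" by (simp add: U0_def)

definition rr :: "nat \<Rightarrow> nat \<Rightarrow> nat \<Rightarrow> nat" where
  "rr m I J = (if I < m - 1 \<and> J < m - 1 then (I + J) mod (m - 1)
               else if I < m - 1 then (2 * I) mod (m - 1) else if J < m - 1 then (2 * J) mod (m - 1) else 0)"

definition gg :: "nat \<Rightarrow> nat \<Rightarrow> nat \<Rightarrow> nat" where
  "gg m I J = 2 * rr m I J + (if I < J then 0 else 1)"

lemma mod2q: "(a::nat) < 2 * q \<Longrightarrow> a mod q = (if a < q then a else a - q)"
proof (cases "a < q")
  case True then show ?thesis by simp
next
  case False
  assume a: "a < 2 * q"
  then have "a - q < q" using False by linarith
  moreover have "a mod q = (a - q) mod q" using False by (simp add: mod_if)
  ultimately show ?thesis using False by simp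
qed

lemma rr_sym: "rr m I J = rr m J I"
  unfolding rr_def by (auto simp: add.commute)

lemma rr_lt: "2 \<le> m \<Longrightarrow> rr m I J < m - 1"
  unfolding rr_def by auto

lemma rr_inj:
  assumes m: "even m" "2 \<le> m" and b: "I < m" "J < m" "J' < m" and d: "J \<noteq> I" "J' \<noteq> I" "J \<noteq> J'"
  shows "rr m I J \<noteq> rr m I J'"
proof -
  define q where "q = m - 1"
  have q: "odd q" "1 \<le> q" "m = q + 1" using m unfolding q_def by auto
  show ?thesis
  proof (cases "I < q")
    case True
    show ?thesis
    proof (cases "J < q"; cases "J' < q")
      assume a: "J < q" "J' < q"
      then have "rr m I J = (I + J) mod q" "rr m I J' = (I + J') mod q" using True unfolding rr_def q_def by auto
      moreover have "I + J < 2 * q" "I + J' < 2 * q" using a True by auto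
      ultimately show ?thesis using mod2q[of "I + J" q] mod2q[of "I + J'" q] d True a by auto
    next
      assume a: "J < q" "\<not> J' < q"
      then have "rr m I J = (I + J) mod q" "rr m I J' = (2 * I) mod q" using True unfolding rr_def q_def by auto
      moreover have "I + J < 2 * q" "2 * I < 2 * q" using a True by auto
      ultimately show ?thesis using mod2q[of "I + J" q] mod2q[of "2 * I" q] d True a by auto
    next
      assume a: "\<not> J < q" "J' < q"
      then have "rr m I J = (2 * I) mod q" "rr m I J' = (I + J') mod q" using True unfolding rr_def q_def by auto
      moreover have "I + J' < 2 * q" "2 * I < 2 * q" using a True by auto
      ultimately show ?thesis using mod2q[of "I + J'" q] mod2q[of "2 * I" q] d True a by auto
    next
      assume a: "\<not> J < q" "\<not> J' < q"
      then show ?thesis using b d q by auto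
    qed
  next
    case False
    then have I: "I = q" using b q by auto
    then have a: "J < q" "J' < q" using b d q by auto
    then have "rr m I J = (2 * J) mod q" "rr m I J' = (2 * J') mod q" using I unfolding rr_def q_def by auto
    moreover have "(2 * J) mod q = (if 2 * J < q then 2 * J else 2 * J - q)" using a mod2q[of "2 * J" q] by auto
    moreover have "(2 * J') mod q = (if 2 * J' < q then 2 * J' else 2 * J' - q)" using a mod2q[of "2 * J'" q] by auto
    ultimately have e: "rr m I J = (if 2 * J < q then 2 * J else 2 * J - q)" "rr m I J' = (if 2 * J' < q then 2 * J' else 2 * J' - q)"
      by auto
    show ?thesis unfolding e using d(3) q(1) by presburger
  qed
qed

lemma rr_surj:
  assumes m: "even m" "2 \<le> m" and b: "I < m" "r < m - 1"
  shows "\<exists>J<m. J \<noteq> I \<and> rr m I J = r"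
proof -
  define S where "S = {..<m} - {I}"
  have fS: "finite S" unfolding S_def by simp
  have cS: "card S = m - 1" unfolding S_def using b by simp
  have inj: "inj_on (rr m I) S"
    by (rule inj_onI) (use rr_inj[OF m b(1)] in \<open>auto simp: S_def\<close>)
  have sub: "rr m I ` S \<subseteq> {..<m - 1}" using rr_lt[OF m(2)] by auto
  have "card (rr m I ` S) = card {..<m - 1}" using card_image[OF inj] cS by simp
  then have "rr m I ` S = {..<m - 1}" using card_subset_eq[OF _ sub] by simp
  then have "r \<in> rr m I ` S" using b by simp
  then show ?thesis unfolding S_def by auto
qed

lemma gg_lt: "2 \<le> m \<Longrightarrow> gg m I J < 2 * (m - 1)"
  unfolding gg_def using rr_lt[of m I J] by auto

lemma gg_row_inj:
  assumes m: "even m" "2 \<le> m" and b: "I < m" "J < m" "J' < m" and d: "J \<noteq> I" "J' \<noteq> I" "J \<noteq> J'"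
  shows "gg m I J \<noteq> gg m I J'"
  using rr_inj[OF m b d] unfolding gg_def by auto

lemma gg_col_inj:
  assumes m: "even m" "2 \<le> m" and b: "I < m" "I' < m" "J < m" and d: "I \<noteq> J" "I' \<noteq> J" "I \<noteq> I'"
  shows "gg m I J \<noteq> gg m I' J"
  using rr_inj[OF m b(3) b(1) b(2) d] rr_sym[of m I J] rr_sym[of m I' J] unfolding gg_def by auto

lemma gg_surj:
  assumes m: "even m" "2 \<le> m" and b: "I < m" "g < 2 * (m - 1)"
  shows "\<exists>J<m. J \<noteq> I \<and> (gg m I J = g \<or> gg m J I = g)"
proof -
  have "g div 2 < m - 1" using b by auto
  then obtain J where J: "J < m" "J \<noteq> I" "rr m I J = g div 2" using rr_surj[OF m b(1)] by blast
  have g2: "even g \<Longrightarrow> 2 * (g div 2) = g" "odd g \<Longrightarrow> 2 * (g div 2) + 1 = g" by auto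
  have "gg m I J = g \<or> gg m J I = g"
  proof (cases "even g")
    case True then show ?thesis using J rr_sym[of m J I] g2 unfolding gg_def by (cases "I < J") auto
  next
    case False then show ?thesis using J rr_sym[of m J I] g2 unfolding gg_def by (cases "I < J") auto
  qed
  then show ?thesis using J by blast
qed

definition good :: "nat \<Rightarrow> bool" where "good m \<longleftrightarrow> m = 1 \<or> (even m \<and> 2 \<le> m)"

definition cv :: "nat \<Rightarrow> nat \<Rightarrow> nat \<Rightarrow> nat" where
  "cv m x y = (if x div 5 = y div 5 then c0 (x mod 5) (y mod 5)
               else 9 + 5 * gg m (x div 5) (y div 5) + (x mod 5 + y mod 5) mod 5)"

definition Cm :: "nat \<Rightarrow> nat \<times> nat \<rightharpoonup> nat" where
  "Cm m = (\<lambda>z. if fst z < 5 * m \<and> snd z < 5 * m then Some (cv m (fst z) (snd z)) else None)"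

definition Um :: "nat \<Rightarrow> (nat \<times> nat) set" where
  "Um m = {z. fst z < 5 * m \<and> snd z < 5 * m \<and> fst z div 5 = snd z div 5 \<and> (fst z mod 5, snd z mod 5) \<in> U0}"

definition Pm :: "nat \<Rightarrow> nat \<times> nat \<rightharpoonup> nat" where
  "Pm m = (\<lambda>z. if z \<in> Um m then None else Cm m z)"

lemma good_ge1: "good m \<Longrightarrow> 1 \<le> m" unfolding good_def by auto

lemma good_two: "good m \<Longrightarrow> I < m \<Longrightarrow> J < m \<Longrightarrow> I \<noteq> J \<Longrightarrow> even m \<and> 2 \<le> m"
  unfolding good_def by auto

lemma mod5_ne: "(b::nat) < 5 \<Longrightarrow> b' < 5 \<Longrightarrow> b \<noteq> b' \<Longrightarrow> (a + b) mod 5 \<noteq> (a + b') mod 5"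
proof -
  assume h: "b < 5" "b' < 5" "b \<noteq> b'"
  have "(a + b) mod 5 = (a mod 5 + b) mod 5" "(a + b') mod 5 = (a mod 5 + b') mod 5" by (simp_all add: mod_add_left_eq)
  moreover have "a mod 5 < 5" by simp
  ultimately show ?thesis using h mod2q[of "a mod 5 + b" 5] mod2q[of "a mod 5 + b'" 5] by auto
qed

lemma val_ne: "(s::nat) < 5 \<Longrightarrow> s' < 5 \<Longrightarrow> g \<noteq> g' \<Longrightarrow> 9 + 5 * g + s \<noteq> 9 + 5 * g' + s'"
  by presburger

lemma cv_range:
  assumes "good m" "x < 5 * m" "y < 5 * m"
  shows "1 \<le> cv m x y \<and> cv m x y \<le> 2 * (5 * m) - 2"
proof (cases "x div 5 = y div 5")
  case True then show ?thesis using c0_range[of "x mod 5" "y mod 5"] good_ge1[OF assms(1)] unfolding cv_def by auto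
next
  case False
  have "x div 5 < m" "y div 5 < m" using assms by auto
  then have m: "even m" "2 \<le> m" using good_two[OF assms(1)] False by blast+
  have a1: "gg m (x div 5) (y div 5) < 2 * (m - 1)" using gg_lt[OF m(2)] .
  have a2: "(x mod 5 + y mod 5) mod 5 < 5" by simp
  have "9 + 5 * G + S \<le> 2 * (5 * m) - 2" if "G < 2 * (m - 1)" "S < 5" for G S using that m(2) by arith
  from this[OF a1 a2] show ?thesis using False unfolding cv_def by auto
qed

lemma cv_row:
  assumes g: "good m" and b: "x < 5 * m" "y < 5 * m" "y' < 5 * m" and d: "y \<noteq> y'"
  shows "cv m x y \<noteq> cv m x y'"
proof -
  have bl: "x div 5 < m" "y div 5 < m" "y' div 5 < m" using b by auto
  show ?thesis
  proof (cases "y div 5 = y' div 5")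
    case True
    then have "y mod 5 \<noteq> y' mod 5" using d by (metis div_mult_mod_eq)
    then show ?thesis using True c0_row[of "x mod 5" "y mod 5" "y' mod 5"] mod5_ne[of "y mod 5" "y' mod 5" "x mod 5"]
      unfolding cv_def by auto
  next
    case False
    show ?thesis
    proof (cases "x div 5 = y div 5")
      case True then show ?thesis using False c0_range[of "x mod 5" "y mod 5"] unfolding cv_def by auto
    next
      case F2: False
      show ?thesis
      proof (cases "x div 5 = y' div 5")
        case True then show ?thesis using False c0_range[of "x mod 5" "y' mod 5"] unfolding cv_def by auto
      next
        case F3: False
        have m: "even m" "2 \<le> m" using good_two[OF g bl(1) bl(2) F2] by blast+
        have "gg m (x div 5) (y div 5) \<noteq> gg m (x div 5) (y' div 5)"
          using gg_row_inj[OF m bl] F2 F3 False by auto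
        then have "9 + 5 * gg m (x div 5) (y div 5) + (x mod 5 + y mod 5) mod 5 \<noteq> 9 + 5 * gg m (x div 5) (y' div 5) + (x mod 5 + y' mod 5) mod 5"
          by (intro val_ne) auto
        moreover have "cv m x y = 9 + 5 * gg m (x div 5) (y div 5) + (x mod 5 + y mod 5) mod 5" using F2 unfolding cv_def by simp
        moreover have "cv m x y' = 9 + 5 * gg m (x div 5) (y' div 5) + (x mod 5 + y' mod 5) mod 5" using F3 unfolding cv_def by simp
        ultimately show ?thesis by simp
      qed
    qed
  qed
qed

lemma cv_col:
  assumes g: "good m" and b: "x < 5 * m" "x' < 5 * m" "y < 5 * m" and d: "x \<noteq> x'"
  shows "cv m x y \<noteq> cv m x' y"
proof -
  have bl: "x div 5 < m" "x' div 5 < m" "y div 5 < m" using b by auto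
  show ?thesis
  proof (cases "x div 5 = x' div 5")
    case True
    then have "x mod 5 \<noteq> x' mod 5" using d by (metis div_mult_mod_eq)
    then show ?thesis using True c0_col[of "x mod 5" "x' mod 5" "y mod 5"] mod5_ne[of "x mod 5" "x' mod 5" "y mod 5"]
      unfolding cv_def by (auto simp: add.commute)
  next
    case False
    show ?thesis
    proof (cases "x div 5 = y div 5")
      case True then show ?thesis using False c0_range[of "x mod 5" "y mod 5"] unfolding cv_def by auto
    next
      case F2: False
      show ?thesis
      proof (cases "x' div 5 = y div 5")
        case True then show ?thesis using False c0_range[of "x' mod 5" "y mod 5"] unfolding cv_def by auto
      next
        case F3: False
        have m: "even m" "2 \<le> m" using good_two[OF g bl(1) bl(3) F2] by blast+
        have "gg m (x div 5) (y div 5) \<noteq> gg m (x' div 5) (y div 5)"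
          using gg_col_inj[OF m bl] F2 F3 False by auto
        then have "9 + 5 * gg m (x div 5) (y div 5) + (x mod 5 + y mod 5) mod 5 \<noteq> 9 + 5 * gg m (x' div 5) (y div 5) + (x' mod 5 + y mod 5) mod 5"
          by (intro val_ne) auto
        moreover have "cv m x y = 9 + 5 * gg m (x div 5) (y div 5) + (x mod 5 + y mod 5) mod 5" using F2 unfolding cv_def by simp
        moreover have "cv m x' y = 9 + 5 * gg m (x' div 5) (y div 5) + (x' mod 5 + y mod 5) mod 5" using F3 unfolding cv_def by simp
        ultimately show ?thesis by simp
      qed
    qed
  qed
qed

lemma Cm_Lset: "good m \<Longrightarrow> Cm m \<in> Lset (5 * m) (2 * (5 * m) - 2)"
  apply (rule Lset_intro)
  subgoal for i j using cv_range[of m i j] unfolding Cm_def by auto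
  subgoal for z unfolding Cm_def cells_def by (cases z) auto
  subgoal for i j j' using cv_row[of m i j j'] unfolding Cm_def by auto
  subgoal for i i' j using cv_col[of m i i' j] unfolding Cm_def by auto
  done

lemma modfix: "(a::nat) < 5 \<Longrightarrow> s < 5 \<Longrightarrow> (a + (s + 5 - a) mod 5) mod 5 = s"
proof -
  assume h: "a < 5" "s < 5"
  have "(a + (s + 5 - a) mod 5) mod 5 = (a + (s + 5 - a)) mod 5" by (simp add: mod_add_right_eq)
  also have "a + (s + 5 - a) = s + 5" using h by simp
  finally show ?thesis using h by simp
qed

lemma blk: "I < m \<Longrightarrow> (a::nat) < 5 \<Longrightarrow> 5 * I + a < 5 * m \<and> (5 * I + a) div 5 = I \<and> (5 * I + a) mod 5 = a"
  by auto

lemma uniq_con: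
  assumes g: "good m" and cL: "c' \<in> Lset (5 * m) (2 * (5 * m) - 2)" and sub: "Pm m \<subseteq>\<^sub>m c'"
  shows "c' = Cm m"
proof (rule ext)
  fix z :: "nat \<times> nat"
  obtain x y where z: "z = (x,y)" by (cases z)
  have agree: "c' (x',y') = Cm m (x',y')" if "x' < 5 * m" "y' < 5 * m" "(x',y') \<notin> Um m" for x' y'
  proof -
    have "Pm m (x',y') = Cm m (x',y')" "Cm m (x',y') \<noteq> None" using that unfolding Pm_def Cm_def by auto
    then have "(x',y') \<in> dom (Pm m)" by auto
    then show ?thesis using sub \<open>Pm m (x',y') = Cm m (x',y')\<close> unfolding map_le_def by metis
  qed
  show "c' z = Cm m z"
  proof (cases "x < 5 * m \<and> y < 5 * m")
    case False
    then have "z \<notin> cells (5 * m)" unfolding z cells_def by auto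
    then show ?thesis using Lset_None[OF cL] False unfolding z Cm_def by auto
  next
    case True
    show ?thesis
    proof (cases "(x,y) \<in> Um m")
      case False then show ?thesis using agree True z by simp
    next
      case inU: True
      define I where "I = x div 5"
      have yI: "y div 5 = I" using inU unfolding I_def Um_def by auto
      have xy: "x = 5 * I + x mod 5" "y = 5 * I + y mod 5" "y div 5 = I" "I < m"
        using yI True unfolding I_def by (simp_all add: mult_div_mod_eq) (metis mult_div_mod_eq yI I_def, simp add: less_mult_imp_div_less)
      define w where "w a b = the (c' (5 * I + a, 5 * I + b))" for a b
      have cw: "c' (5 * I + a, 5 * I + b) = Some (w a b) \<and> 1 \<le> w a b \<and> w a b \<le> 2 * (5 * m) - 2"
        if "a < 5" "b < 5" for a b
        using Lset_D[OF cL, of "5 * I + a" "5 * I + b"] blk[OF xy(4) that(1)] blk[OF xy(4) that(2)]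
        unfolding w_def by auto
      have P: "w a b = c0 a b" if "a < 5" "b < 5" "(a,b) \<notin> U0" for a b
      proof -
        have "(5 * I + a, 5 * I + b) \<notin> Um m" using that blk[OF xy(4) that(1)] blk[OF xy(4) that(2)]
          unfolding Um_def by auto
        then have "c' (5 * I + a, 5 * I + b) = Some (cv m (5 * I + a) (5 * I + b))"
          using agree blk[OF xy(4) that(1)] blk[OF xy(4) that(2)] unfolding Cm_def by auto
        then show ?thesis using cw[OF that(1,2)] blk[OF xy(4) that(1)] blk[OF xy(4) that(2)] unfolding cv_def by auto
      qed
      have rng: "1 \<le> w a b \<and> w a b \<le> 8" if ab: "a < 5" "b < 5" for a b
      proof (rule ccontr)
        assume "\<not> (1 \<le> w a b \<and> w a b \<le> 8)"
        then have t9: "9 \<le> w a b" using cw[OF ab] by auto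
        define t where "t = w a b"
        have tk: "t \<le> 2 * (5 * m) - 2" using cw[OF ab] unfolding t_def by simp
        then have m2: "2 \<le> m" using t9 unfolding t_def by simp
        then have ev: "even m" using g unfolding good_def by auto
        define gm where "gm = (t - 9) div 5"
        define sm where "sm = (t - 9) mod 5"
        have tdec: "t = 9 + 5 * gm + sm" using t9 unfolding gm_def sm_def t_def by simp
        have sm5: "sm < 5" unfolding sm_def by simp
        have "gm < 2 * (m - 1)" using tk tdec m2 by linarith
        then obtain J where J: "J < m" "J \<noteq> I" "gg m I J = gm \<or> gg m J I = gm"
          using gg_surj[OF ev m2 xy(4)] by blast
        show False
        proof (cases "gg m I J = gm")
          case True
          define b2 where "b2 = (sm + 5 - a) mod 5"
          have b2: "b2 < 5" unfolding b2_def by simp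
          have cell: "5 * I + a < 5 * m" "5 * J + b2 < 5 * m" using blk[OF xy(4) ab(1)] blk[OF J(1) b2] by auto
          have notU: "(5 * I + a, 5 * J + b2) \<notin> Um m" using blk[OF xy(4) ab(1)] blk[OF J(1) b2] J(2)
            unfolding Um_def by auto
          have "c' (5 * I + a, 5 * J + b2) = Some (cv m (5 * I + a) (5 * J + b2))"
            using agree[OF cell notU] cell unfolding Cm_def by simp
          also have "cv m (5 * I + a) (5 * J + b2) = 9 + 5 * gm + sm"
            using blk[OF xy(4) ab(1)] blk[OF J(1) b2] J(2) True modfix[OF ab(1) sm5] unfolding cv_def b2_def by auto
          finally have e2: "c' (5 * I + a, 5 * J + b2) = Some t" using tdec by simp
          have "5 * I + b \<noteq> 5 * J + b2" using blk[OF xy(4) ab(2)] blk[OF J(1) b2] J(2) by metis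
          then have "c' (5 * I + a, 5 * I + b) \<noteq> c' (5 * I + a, 5 * J + b2)"
            using Lset_row[OF cL] cell blk[OF xy(4) ab(2)] by blast
          then show False using e2 cw[OF ab] unfolding t_def by simp
        next
          case False
          then have Jg: "gg m J I = gm" using J by auto
          define a2 where "a2 = (sm + 5 - b) mod 5"
          have a2: "a2 < 5" unfolding a2_def by simp
          have cell: "5 * J + a2 < 5 * m" "5 * I + b < 5 * m" using blk[OF xy(4) ab(2)] blk[OF J(1) a2] by auto
          have notU: "(5 * J + a2, 5 * I + b) \<notin> Um m" using blk[OF xy(4) ab(2)] blk[OF J(1) a2] J(2)
            unfolding Um_def by auto
          have "c' (5 * J + a2, 5 * I + b) = Some (cv m (5 * J + a2) (5 * I + b))"
            using agree[OF cell notU] cell unfolding Cm_def by simp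
          also have "cv m (5 * J + a2) (5 * I + b) = 9 + 5 * gm + sm"
            using blk[OF xy(4) ab(2)] blk[OF J(1) a2] J(2) Jg modfix[OF ab(2) sm5] unfolding cv_def a2_def
            by (auto simp: add.commute)
          finally have e2: "c' (5 * J + a2, 5 * I + b) = Some t" using tdec by simp
          have "5 * I + a \<noteq> 5 * J + a2" using blk[OF xy(4) ab(1)] blk[OF J(1) a2] J(2) by metis
          then have "c' (5 * I + a, 5 * I + b) \<noteq> c' (5 * J + a2, 5 * I + b)"
            using Lset_col[OF cL] cell blk[OF xy(4) ab(1)] by blast
          then show False using e2 cw[OF ab] unfolding t_def by simp
        qed
      qed
      have rowd: "w a b \<noteq> w a b'" if "a < 5" "b < 5" "b' < 5" "b \<noteq> b'" for a b b'
      proof -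
        have "c' (5 * I + a, 5 * I + b) \<noteq> c' (5 * I + a, 5 * I + b')"
          using Lset_row[OF cL] blk[OF xy(4) that(1)] blk[OF xy(4) that(2)] blk[OF xy(4) that(3)] that(4) by auto
        then show ?thesis using cw that by auto
      qed
      have cold: "w a b \<noteq> w a' b" if "a < 5" "a' < 5" "b < 5" "a \<noteq> a'" for a a' b
      proof -
        have "c' (5 * I + a, 5 * I + b) \<noteq> c' (5 * I + a', 5 * I + b)"
          using Lset_col[OF cL] blk[OF xy(4) that(1)] blk[OF xy(4) that(2)] blk[OF xy(4) that(3)] that(4) by auto
        then show ?thesis using cw that by auto
      qed
      have fin: "w (x mod 5) (y mod 5) = c0 (x mod 5) (y mod 5)"
        by (rule base_unique[OF P rng rowd cold]) auto
      have "c' z = Some (w (x mod 5) (y mod 5))" using cw[of "x mod 5" "y mod 5"] xy z by (metis mod_less_divisor zero_less_numeral)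
      moreover have "Cm m z = Some (c0 (x mod 5) (y mod 5))" using True xy z unfolding Cm_def cv_def I_def by auto
      ultimately show ?thesis using fin by simp
    qed
  qed
qed

lemma Um_sub: "Um m \<subseteq> cells (5 * m)"
  unfolding Um_def cells_def by auto

lemma Um_image: "Um m = (\<lambda>(I,ab). (5 * I + fst ab, 5 * I + snd ab)) ` ({..<m} \<times> U0)"
proof
  show "Um m \<subseteq> (\<lambda>(I,ab). (5 * I + fst ab, 5 * I + snd ab)) ` ({..<m} \<times> U0)"
  proof
    fix z assume z: "z \<in> Um m"
    obtain x y where xy: "z = (x,y)" by (cases z)
    have h: "x div 5 = y div 5" "(x mod 5, y mod 5) \<in> U0" "x < 5 * m" using z xy unfolding Um_def by auto
    have "x div 5 < m" using h(3) by (simp add: less_mult_imp_div_less)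
    moreover have "z = (5 * (x div 5) + x mod 5, 5 * (x div 5) + y mod 5)"
      using xy h(1) by (metis mult_div_mod_eq)
    ultimately show "z \<in> (\<lambda>(I,ab). (5 * I + fst ab, 5 * I + snd ab)) ` ({..<m} \<times> U0)"
      using h(2) by (auto intro!: image_eqI[where x="(x div 5, (x mod 5, y mod 5))"])
  qed
  show "(\<lambda>(I,ab). (5 * I + fst ab, 5 * I + snd ab)) ` ({..<m} \<times> U0) \<subseteq> Um m"
    using U0_sub blk unfolding Um_def by fastforce
qed

lemma card_Um: "card (Um m) = 8 * m"
proof -
  have inj: "inj_on (\<lambda>(I,ab). (5 * I + fst ab, 5 * I + snd ab)) ({..<m} \<times> U0)"
  proof (rule inj_onI)
    fix p q assume p: "p \<in> {..<m} \<times> U0" and q: "q \<in> {..<m} \<times> U0"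
      and e: "(\<lambda>(I,ab). (5 * I + fst ab, 5 * I + snd ab)) p = (\<lambda>(I,ab). (5 * I + fst ab, 5 * I + snd ab)) q"
    obtain I a b where pp: "p = (I,(a,b))" by (metis prod.collapse)
    obtain I' a' b' where qq: "q = (I',(a',b'))" by (metis prod.collapse)
    have ab: "a < 5" "b < 5" "a' < 5" "b' < 5" using p q pp qq U0_sub by auto
    have e1: "5 * I + a = 5 * I' + a'" "5 * I + b = 5 * I' + b'" using e pp qq by auto
    have "I = I'" using e1(1) ab by presburger
    then show "p = q" using e1 pp qq by simp
  qed
  show ?thesis unfolding Um_image card_image[OF inj] by (simp add: card_cartesian_product card_U0)
qed

lemma dom_Pm: "dom (Pm m) = cells (5 * m) - Um m"
  unfolding Pm_def Cm_def cells_def dom_def by auto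

lemma card_cells: "card (cells n) = n * n"
  unfolding cells_def by (simp add: card_cartesian_product)

lemma card_dom_Pm: "card (dom (Pm m)) = (5 * m) * (5 * m) - 8 * m"
proof -
  have fc: "finite (cells (5 * m))" unfolding cells_def by simp
  have "card (cells (5 * m) - Um m) = card (cells (5 * m)) - card (Um m)"
    using card_Diff_subset[OF finite_subset[OF Um_sub fc] Um_sub] .
  then show ?thesis by (simp add: card_cells card_Um dom_Pm)
qed

lemma Pm_partial: "good m \<Longrightarrow> partial_coloring (5 * m) (2 * (5 * m) - 2) (Pm m)"
proof -
  assume g: "good m"
  have "ran (Pm m) \<subseteq> {1..2 * (5 * m) - 2}"
  proof
    fix t assume "t \<in> ran (Pm m)"
    then obtain z where "Pm m z = Some t" by (auto simp: ran_def)
    then have "fst z < 5 * m" "snd z < 5 * m" "t = cv m (fst z) (snd z)" unfolding Pm_def Cm_def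
      by (auto split: if_splits)
    then show "t \<in> {1..2 * (5 * m) - 2}" using cv_range[OF g] by auto
  qed
  then show ?thesis unfolding partial_coloring_def dom_Pm by auto
qed

lemma Pm_unique: "good m \<Longrightarrow> uniquely_extends (5 * m) (2 * (5 * m) - 2) (Pm m)"
  unfolding uniquely_extends_def
proof (rule ex1I[of _ "Cm m"])
  assume g: "good m"
  show "Cm m \<in> Lset (5 * m) (2 * (5 * m) - 2) \<and> Pm m \<subseteq>\<^sub>m Cm m"
    using Cm_Lset[OF g] unfolding map_le_def Pm_def by (auto simp: dom_def split: if_splits)
  show "c' = Cm m" if "c' \<in> Lset (5 * m) (2 * (5 * m) - 2) \<and> Pm m \<subseteq>\<^sub>m c'" for c'
    using uniq_con[OF g] that by blast
qed

lemma lower: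
  assumes n: "1 \<le> n" and pc: "partial_coloring n (2 * n - 2) p" and ue: "uniquely_extends n (2 * n - 2) p"
  shows "5 * (n * n - card (dom p)) \<le> 8 * n"
proof -
  obtain c where c: "c \<in> Lset n (2 * n - 2)" "p \<subseteq>\<^sub>m c"
    and un: "\<And>c2. c2 \<in> Lset n (2 * n - 2) \<and> p \<subseteq>\<^sub>m c2 \<Longrightarrow> c2 = c"
    using ue unfolding uniquely_extends_def by blast
  define U where "U = cells n - dom p"
  have dp: "dom p \<subseteq> cells n" using pc unfolding partial_coloring_def by simp
  interpret L: LB n "2 * n - 2" c U
  proof
    show "c \<in> Lset n (2 * n - 2)" by (rule c(1))
    show "2 * n - 2 = 2 * n - 2" ..
    show "1 \<le> n" by (rule n)
    show "U \<subseteq> cells n" unfolding U_def by auto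
    show "c2 = c" if "c2 \<in> Lset n (2 * n - 2)" "\<And>z. z \<notin> U \<Longrightarrow> c2 z = c z" for c2
    proof -
      have "p \<subseteq>\<^sub>m c2"
        unfolding map_le_def
      proof (intro ballI)
        fix z assume z: "z \<in> dom p"
        then have "z \<notin> U" unfolding U_def by simp
        then have "c2 z = c z" using that(2) by simp
        then show "p z = c2 z" using c(2) z unfolding map_le_def by simp
      qed
      then show ?thesis using un that(1) by blast
    qed
  qed
  have "card U = n * n - card (dom p)"
    unfolding U_def using card_Diff_subset[OF finite_subset[OF dp] dp] card_cells
    by (simp add: cells_def)
  then show ?thesis using L.main_bound by simp
qed

theorem mainTheorem3:
  fixes n :: nat
  assumes "n > 0" and "n = 5 \<or> 10 dvd n"
  shows "real (defining_number n (2*n - 2)) = real n ^ 2 - 8 * real n / 5"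
proof -
  have "5 dvd n" using assms(2) by (auto intro: dvd_trans[of 5 10 n])
  then obtain m where nm: "n = 5 * m" by (auto simp: dvd_def)
  have g: "good m"
  proof (cases "n = 5")
    case True then show ?thesis using nm unfolding good_def by simp
  next
    case False
    then have "10 dvd 5 * m" using assms(2) nm by simp
    then have "even m" by presburger
    moreover have "m \<noteq> 0" using assms(1) nm by simp
    ultimately show ?thesis unfolding good_def by presburger
  qed
  define N where "N = n * n - 8 * m"
  have ex: "\<exists>p. partial_coloring n (2 * n - 2) p \<and> uniquely_extends n (2 * n - 2) p \<and> card (dom p) = N"
    using Pm_partial[OF g] Pm_unique[OF g] card_dom_Pm[of m] unfolding nm N_def by blast
  have low: "N \<le> card (dom p)" if "partial_coloring n (2 * n - 2) p" "uniquely_extends n (2 * n - 2) p" for p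
  proof -
    have "5 * (n * n - card (dom p)) \<le> 8 * n" using lower[OF _ that] assms(1) by simp
    then have "n * n - card (dom p) \<le> 8 * m" using nm by simp
    then show ?thesis unfolding N_def by simp
  qed
  have dn: "defining_number n (2 * n - 2) = N"
    unfolding defining_number_def
    by (rule Least_equality) (use ex low in auto)
  have le: "8 * m \<le> n * n" using nm g good_ge1[OF g] by (simp add: nm)
  have "real N = real (n * n) - real (8 * m)" unfolding N_def using le by (simp add: of_nat_diff)
  also have "\<dots> = real n ^ 2 - 8 * real n / 5" using nm by (simp add: power2_eq_square)
  finally show ?thesis using dn by simp
qed


end
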